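(* For every integer $n\geq 2$, there is a Hamilton cycle in the $n$-dimensional hypercube $Q_n$ that contains every edge of every chain of the Greene–Kleitman symmetric chain decomposition of $Q_n$.
   Context: $Q_n$ is the graph on all $\{0,1\}$-strings of length $n$, adjacent iff differing in exactly one position; level $k$ is the set of strings with exactly $k$ ones. A symmetric chain is a path $(x_k,x_{k+1},\ldots,x_{n-k})$ in $Q_n$ with $x_i$ in level $i$ for all $i$; a symmetric chain decomposition is a partition of the vertex set of $Q_n$ into symmetric chains. The Greene–Kleitman symmetric chain decomposition is defined as follows: for a vertex $x$, interpret each $0$ as an opening bracket and each $1$ as a closing bracket and match closest pairs of opening and closing brackets in the usual way; the chain containing $x$ is obtained by repeatedly flipping the leftmost unmatched $0$ to $1$ (to ascend) or the rightmost unmatched $1$ to $0$ (to descend), until no unmatched bit can be flipped in that direction. *)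

theory Defs
  imports Main
begin

text \<open>Bitstrings of length n are lists of booleans; False = 0 (opening bracket),
True = 1 (closing bracket). Positions are 0-based, left to right.\<close>

definition cube_vertices :: "nat \<Rightarrow> bool list set" where
  "cube_vertices n = {x. length x = n}"

definition cube_adj :: "bool list \<Rightarrow> bool list \<Rightarrow> bool" where
  "cube_adj x y \<longleftrightarrow> length x = length y \<and> card {i. i < length x \<and> x ! i \<noteq> y ! i} = 1"

text \<open>Bracket matching by a left-to-right scan with a stack of positions of
unmatched opening brackets. Result: (positions of unmatched 0s (as stack),
positions of unmatched 1s).\<close>

fun bracket_scan :: "nat \<Rightarrow> nat list \<Rightarrow> nat list \<Rightarrow> bool list \<Rightarrow> nat list \<times> nat list" where
  "bracket_scan i st ones [] = (st, ones)"
| "bracket_scan i st ones (False # xs) = bracket_scan (Suc i) (i # st) ones xs"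
| "bracket_scan i st ones (True # xs) =
     (case st of [] \<Rightarrow> bracket_scan (Suc i) [] (ones @ [i]) xs
               | _ # st' \<Rightarrow> bracket_scan (Suc i) st' ones xs)"

definition unmatched_zeros :: "bool list \<Rightarrow> nat set" where
  "unmatched_zeros x = set (fst (bracket_scan 0 [] [] x))"

definition unmatched_ones :: "bool list \<Rightarrow> nat set" where
  "unmatched_ones x = set (snd (bracket_scan 0 [] [] x))"

definition gk_up :: "bool list \<Rightarrow> bool list option" where
  "gk_up x = (if unmatched_zeros x = {} then None
              else Some (x[Min (unmatched_zeros x) := True]))"

definition gk_down :: "bool list \<Rightarrow> bool list option" where
  "gk_down x = (if unmatched_ones x = {} then None
                else Some (x[Max (unmatched_ones x) := False]))"

definition gk_chain_edges :: "nat \<Rightarrow> bool list set set" where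
  "gk_chain_edges n =
     {{x, y} | x y. x \<in> cube_vertices n \<and> (gk_up x = Some y \<or> gk_down x = Some y)}"

definition ham_cycle :: "nat \<Rightarrow> bool list list \<Rightarrow> bool" where
  "ham_cycle n C \<longleftrightarrow> distinct C \<and> set C = cube_vertices n \<and> length C \<ge> 3 \<and>
     (\<forall>i < length C. cube_adj (C ! i) (C ! ((i + 1) mod length C)))"

definition cycle_edges :: "bool list list \<Rightarrow> bool list set set" where
  "cycle_edges C = {{C ! i, C ! ((i + 1) mod length C)} | i. i < length C}"

end

theory Submission
  imports Defs
begin
abbreviation "UZ \<equiv> unmatched_zeros"
abbreviation "UO \<equiv> unmatched_ones"

lemma scan_snoc:
  "bracket_scan i st ones (xs @ [b]) =
     (case bracket_scan i st ones xs of (st', ones') \<Rightarrow> bracket_scan (i + length xs) st' ones' [b])"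
  by (induction i st ones xs rule: bracket_scan.induct) (auto split: list.splits prod.splits)

abbreviation "sc x \<equiv> bracket_scan 0 [] [] x"

lemma sc_snoc_F: "sc (x @ [False]) = (length x # fst (sc x), snd (sc x))"
  by (simp add: scan_snoc split: prod.splits)

lemma sc_snoc_T: "sc (x @ [True]) =
   (case fst (sc x) of [] \<Rightarrow> ([], snd (sc x) @ [length x]) | _ # st \<Rightarrow> (st, snd (sc x)))"
  by (simp add: scan_snoc split: prod.splits list.splits)

lemma sc_inv:
  "sorted_wrt (>) (fst (sc x)) \<and> (\<forall>j\<in>set (fst (sc x)). j < length x \<and> x!j = False)
   \<and> (\<forall>j\<in>set (snd (sc x)). j < length x \<and> x!j = True)
   \<and> (\<forall>i\<in>set (snd (sc x)). \<forall>j\<in>set (fst (sc x)). i < j)"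
proof (induction x rule: rev_induct)
  case Nil
  then show ?case by simp
next
  case (snoc b x)
  show ?case
  proof (cases b)
    case False
    then show ?thesis using snoc by (auto simp: sc_snoc_F nth_append)
  next
    case True
    then show ?thesis using snoc
      by (auto simp: sc_snoc_T nth_append split: list.splits)
  qed
qed

lemma UZ_lt: "j \<in> UZ x \<Longrightarrow> j < length x"
  using sc_inv[of x] by (auto simp: unmatched_zeros_def)
lemma UZ_val: "j \<in> UZ x \<Longrightarrow> x ! j = False"
  using sc_inv[of x] by (auto simp: unmatched_zeros_def)
lemma UO_lt: "j \<in> UO x \<Longrightarrow> j < length x"
  using sc_inv[of x] by (auto simp: unmatched_ones_def)
lemma UO_val: "j \<in> UO x \<Longrightarrow> x ! j = True"
  using sc_inv[of x] by (auto simp: unmatched_ones_def)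
lemma UO_UZ_less: "i \<in> UO x \<Longrightarrow> j \<in> UZ x \<Longrightarrow> i < j"
  using sc_inv[of x] by (auto simp: unmatched_ones_def unmatched_zeros_def)
lemma finite_UZ[simp]: "finite (UZ x)"
  by (simp add: unmatched_zeros_def)
lemma finite_UO[simp]: "finite (UO x)"
  by (simp add: unmatched_ones_def)

lemma UZ_snoc_F: "UZ (x @ [False]) = insert (length x) (UZ x)"
  by (simp add: unmatched_zeros_def sc_snoc_F)
lemma UO_snoc_F: "UO (x @ [False]) = UO x"
  by (simp add: unmatched_ones_def sc_snoc_F)
lemma UO_snoc_T: "UO (x @ [True]) = (if UZ x = {} then insert (length x) (UO x) else UO x)"
  by (auto simp: unmatched_ones_def unmatched_zeros_def sc_snoc_T split: list.splits)
lemma UZ_snoc_T: "UZ (x @ [True]) = UZ x - {Max (UZ x)}"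
proof (cases "fst (sc x)")
  case Nil
  then show ?thesis by (simp add: unmatched_zeros_def sc_snoc_T)
next
  case (Cons h st)
  have s: "sorted_wrt (>) (h # st)" using sc_inv[of x] Cons by simp
  hence "\<forall>j\<in>set st. j < h" by simp
  hence m: "Max (set (h # st)) = h" by (intro Max_eqI) auto
  have "h \<notin> set st" using \<open>\<forall>j\<in>set st. j < h\<close> by auto
  then show ?thesis using Cons m by (auto simp: unmatched_zeros_def sc_snoc_T)
qed

lemma gk_up_None: "gk_up x = None \<longleftrightarrow> UZ x = {}"
  by (simp add: gk_up_def)

lemma Min_insert_big:
  assumes "finite S" "S \<noteq> {}" "\<forall>j\<in>S. j < (n::nat)"
  shows "Min (insert n S) = Min S"
proof -
  have "Min S \<in> S" using assms by (intro Min_in)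
  hence "Min S < n" using assms by auto
  then show ?thesis using Min_insert[OF assms(1,2), of n] by simp
qed

lemma Min_lt_Max:
  fixes S :: "nat set"
  assumes "k \<in> S" "k \<noteq> Max S" "finite S"
  shows "Min S < Max S"
proof -
  have "Min S \<le> k" using assms by simp
  moreover have "k \<le> Max S" using assms by simp
  ultimately show ?thesis using assms(2) by linarith
qed

lemma Min_UZ_lt: "UZ x \<noteq> {} \<Longrightarrow> Min (UZ x) < length x"
  using Min_in[OF finite_UZ] UZ_lt by blast

lemma up_snoc_F:
  "gk_up (x @ [False]) = (if UZ x = {} then Some (x @ [True]) else map_option (\<lambda>w. w @ [False]) (gk_up x))"
proof (cases "UZ x = {}")
  case True
  then show ?thesis by (simp add: gk_up_def UZ_snoc_F)
next
  case False
  have m: "Min (insert (length x) (UZ x)) = Min (UZ x)"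
    using False by (intro Min_insert_big) (auto dest: UZ_lt)
  have "Min (UZ x) < length x" using False by (rule Min_UZ_lt)
  then show ?thesis using False m by (simp add: gk_up_def UZ_snoc_F list_update_append1)
qed

lemma up_snoc_T:
  "gk_up (x @ [True]) = (if UZ x - {Max (UZ x)} = {} then None else map_option (\<lambda>w. w @ [True]) (gk_up x))"
proof (cases "UZ x - {Max (UZ x)} = {}")
  case True
  then show ?thesis by (simp add: gk_up_def UZ_snoc_T)
next
  case False
  let ?M = "Max (UZ x)"
  from False obtain k where k: "k \<in> UZ x" "k \<noteq> ?M" by auto
  have ne: "UZ x \<noteq> {}" using k by auto
  have "Min (UZ x) < ?M" using k by (intro Min_lt_Max) auto
  hence mm: "Min (UZ x - {?M}) = Min (UZ x)"
    using ne by (intro Min_eqI) (auto intro: Min_in)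
  have "Min (UZ x) < length x" using ne by (rule Min_UZ_lt)
  then show ?thesis using False ne mm by (simp add: gk_up_def UZ_snoc_T list_update_append1)
qed

lemma up_step:
  "gk_up v = Some w \<Longrightarrow> UZ w = UZ v - {Min (UZ v)} \<and> UO w = insert (Min (UZ v)) (UO v) \<and> length w = length v"
proof (induction v arbitrary: w rule: rev_induct)
  case Nil
  then show ?case by (simp add: gk_up_def unmatched_zeros_def)
next
  case (snoc b x)
  show ?case
  proof (cases b)
    case False
    show ?thesis
    proof (cases "UZ x = {}")
      case True
      then show ?thesis using snoc.prems False
        by (auto simp: up_snoc_F UZ_snoc_F UZ_snoc_T UO_snoc_F UO_snoc_T)
    next
      case ne: False
      then obtain w0 where w0: "gk_up x = Some w0" by (simp add: gk_up_def)
      hence w: "w = w0 @ [False]" using snoc.prems False ne by (simp add: up_snoc_F)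
      have IH: "UZ w0 = UZ x - {Min (UZ x)}" "UO w0 = insert (Min (UZ x)) (UO x)" "length w0 = length x"
        using snoc.IH[OF w0] by auto
      have m: "Min (insert (length x) (UZ x)) = Min (UZ x)"
        using ne by (intro Min_insert_big) (auto dest: UZ_lt)
      have "Min (UZ x) < length x" using ne by (rule Min_UZ_lt)
      then show ?thesis using False w IH m
        by (auto simp: UZ_snoc_F UO_snoc_F)
    qed
  next
    case True
    let ?M = "Max (UZ x)"
    have ne1: "UZ x - {?M} \<noteq> {}" using snoc.prems True by (auto simp: up_snoc_T split: if_splits)
    then obtain k where k: "k \<in> UZ x" "k \<noteq> ?M" by auto
    have ne: "UZ x \<noteq> {}" using k by auto
    then obtain w0 where w0: "gk_up x = Some w0" by (simp add: gk_up_def)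
    hence w: "w = w0 @ [True]" using snoc.prems True ne1 by (simp add: up_snoc_T)
    have IH: "UZ w0 = UZ x - {Min (UZ x)}" "UO w0 = insert (Min (UZ x)) (UO x)" "length w0 = length x"
      using snoc.IH[OF w0] by auto
    have lt: "Min (UZ x) < ?M" using k by (intro Min_lt_Max) auto
    hence mm: "Min (UZ x - {?M}) = Min (UZ x)"
      using ne by (intro Min_eqI) (auto intro: Min_in)
    have Mx: "Max (UZ x - {Min (UZ x)}) = ?M"
      using ne lt by (intro Max_eqI) auto
    have "?M \<in> UZ w0" using IH(1) lt ne by auto
    hence "UZ w0 \<noteq> {}" by auto
    then show ?thesis using True w IH mm Mx ne
      by (auto simp: UZ_snoc_T UO_snoc_T)
  qed
qed

lemma down_step:
  "gk_down v = Some w \<Longrightarrow> UZ w = insert (Max (UO v)) (UZ v) \<and> length w = length v"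
proof (induction v arbitrary: w rule: rev_induct)
  case Nil
  then show ?case by (simp add: gk_down_def unmatched_ones_def)
next
  case (snoc b x)
  show ?case
  proof (cases b)
    case False
    have ne: "UO x \<noteq> {}" using snoc.prems False by (simp add: gk_down_def UO_snoc_F split: if_splits)
    then obtain w0 where w0: "gk_down x = Some w0" by (simp add: gk_down_def)
    have lt: "Max (UO x) < length x" using ne by (auto dest: UO_lt)
    have w: "w = w0 @ [False]" using snoc.prems False ne w0 lt
      by (auto simp: gk_down_def UO_snoc_F list_update_append1)
    show ?thesis using snoc.IH[OF w0] w False by (simp add: UZ_snoc_F UO_snoc_F insert_commute)
  next
    case True
    show ?thesis
    proof (cases "UZ x = {}")
      case True
      have "\<forall>j\<in>UO x. j < length x" by (auto dest: UO_lt)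
      hence "Max (insert (length x) (UO x)) = length x" by (intro Max_eqI) auto
      then show ?thesis using snoc.prems \<open>b\<close> True
        by (auto simp: gk_down_def UO_snoc_T UZ_snoc_F UZ_snoc_T)
    next
      case nz: False
      have ne: "UO x \<noteq> {}" using snoc.prems True nz by (simp add: gk_down_def UO_snoc_T split: if_splits)
      then obtain w0 where w0: "gk_down x = Some w0" by (simp add: gk_down_def)
      let ?j = "Max (UO x)"
      have lt: "?j < length x" using ne by (auto dest: UO_lt)
      have w: "w = w0 @ [True]" using snoc.prems True nz ne w0 lt
        by (auto simp: gk_down_def UO_snoc_T list_update_append1)
      have IH: "UZ w0 = insert ?j (UZ x)" using snoc.IH[OF w0] by simp
      have jl: "?j < Max (UZ x)" using Max_in[OF finite_UO ne] Max_in[OF finite_UZ nz] by (rule UO_UZ_less)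
      have "Max (insert ?j (UZ x)) = Max (UZ x)" using nz jl by (simp add: max_def)
      then show ?thesis using w IH jl True nz snoc.IH[OF w0]
        by (auto simp: UZ_snoc_T UO_snoc_T)
    qed
  qed
qed

lemma down_up: "gk_down v = Some w \<Longrightarrow> gk_up w = Some v"
proof -
  assume d: "gk_down v = Some w"
  let ?j = "Max (UO v)"
  have ne: "UO v \<noteq> {}" using d by (simp add: gk_down_def split: if_splits)
  have jin: "?j \<in> UO v" using ne by simp
  have w: "w = v[?j := False]" using d ne by (simp add: gk_down_def)
  have uz: "UZ w = insert ?j (UZ v)" using down_step[OF d] by simp
  have "Min (UZ w) = ?j" unfolding uz using jin
    by (intro Min_eqI) (auto dest: UO_UZ_less)
  moreover have "v ! ?j = True" using jin by (rule UO_val)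
  hence "v[?j := True] = v" using list_update_id[of v ?j] by simp
  ultimately show ?thesis using uz w by (simp add: gk_up_def)
qed

lemma card_parity: "even (card (UZ x) + card (UO x) + length x)"
proof (induction x rule: rev_induct)
  case Nil
  then show ?case by (simp add: unmatched_zeros_def unmatched_ones_def)
next
  case (snoc b x)
  have n1: "length x \<notin> UZ x" by (auto dest: UZ_lt)
  have n2: "length x \<notin> UO x" by (auto dest: UO_lt)
  show ?case
  proof (cases b)
    case False
    then show ?thesis using snoc n1 by (simp add: UZ_snoc_F UO_snoc_F)
  next
    case True
    show ?thesis
    proof (cases "UZ x = {}")
      case True
      then show ?thesis using snoc n2 \<open>b\<close> by (simp add: UZ_snoc_T UO_snoc_T)
    next
      case False
      have "card (UZ x - {Max (UZ x)}) = card (UZ x) - 1" using False by simp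
      moreover have "card (UZ x) \<ge> 1" using False by (simp add: Suc_leI card_gt_0_iff)
      ultimately show ?thesis using snoc False \<open>b\<close> by (simp add: UZ_snoc_T UO_snoc_T)
    qed
  qed
qed

lemma Max_Suc_image: "finite S \<Longrightarrow> S \<noteq> {} \<Longrightarrow> Max (Suc ` S) = Suc (Max S)"
  by (simp add: mono_Max_commute[symmetric] mono_Suc)
lemma Min_Suc_image: "finite S \<Longrightarrow> S \<noteq> {} \<Longrightarrow> Min (Suc ` S) = Suc (Min S)"
  by (simp add: mono_Min_commute[symmetric] mono_Suc)
lemma Suc_image_diff: "Suc ` A - {Suc m} = Suc ` (A - {m})"
  by auto

lemma UZ_snoc_F': "UZ (a # y @ [False]) = insert (Suc (length y)) (UZ (a # y))"
  using UZ_snoc_F[of "a # y"] by simp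
lemma UO_snoc_F': "UO (a # y @ [False]) = UO (a # y)"
  using UO_snoc_F[of "a # y"] by simp
lemma UZ_snoc_T': "UZ (a # y @ [True]) = UZ (a # y) - {Max (UZ (a # y))}"
  using UZ_snoc_T[of "a # y"] by simp
lemma UO_snoc_T': "UO (a # y @ [True]) = (if UZ (a # y) = {} then insert (Suc (length y)) (UO (a # y)) else UO (a # y))"
  using UO_snoc_T[of "a # y"] by simp

lemma cons_T_formulas: "UZ (True # x) = Suc ` UZ x \<and> UO (True # x) = insert 0 (Suc ` UO x)"
proof (induction x rule: rev_induct)
  case Nil
  then show ?case by (simp add: unmatched_zeros_def unmatched_ones_def)
next
  case (snoc b y)
  have e: "True # y @ [b] = (True # y) @ [b]" by simp
  show ?case
  proof (cases b)
    case False
    then show ?thesis using snoc by (simp add: UZ_snoc_F UO_snoc_F UZ_snoc_F' UO_snoc_F' insert_commute)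
  next
    case True
    show ?thesis
    proof (cases "UZ y = {}")
      case True
      then show ?thesis using snoc \<open>b\<close> by (simp add: UZ_snoc_T UO_snoc_T UZ_snoc_T' UO_snoc_T' insert_commute)
    next
      case False
      then show ?thesis using snoc \<open>b\<close>
        by (simp add: UZ_snoc_T UO_snoc_T UZ_snoc_T' UO_snoc_T' Max_Suc_image Suc_image_diff)
    qed
  qed
qed

lemma cons_F_formulas:
  "UZ (False # x) = (if UO x = {} then insert 0 (Suc ` UZ x) else Suc ` UZ x) \<and>
   UO (False # x) = Suc ` (UO x - {Min (UO x)})"
proof (induction x rule: rev_induct)
  case Nil
  then show ?case by (simp add: unmatched_zeros_def unmatched_ones_def)
next
  case (snoc b y)
  have e: "False # y @ [b] = (False # y) @ [b]" by simp
  show ?case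
  proof (cases b)
    case False
    then show ?thesis using snoc by (simp add: UZ_snoc_F UO_snoc_F UZ_snoc_F' UO_snoc_F' insert_commute)
  next
    case True
    show ?thesis
    proof (cases "UZ y = {}")
      case True
      show ?thesis
      proof (cases "UO y = {}")
        case True
        then show ?thesis using snoc \<open>b\<close> \<open>UZ y = {}\<close> by (simp add: UZ_snoc_T UO_snoc_T UZ_snoc_T' UO_snoc_T' insert_commute)
      next
        case False
        have m: "Min (insert (length y) (UO y)) = Min (UO y)"
          using False by (intro Min_insert_big) (auto dest: UO_lt)
        have "Min (UO y) \<noteq> length y" using Min_in[OF finite_UO False] by (auto dest: UO_lt)
        then show ?thesis using snoc \<open>b\<close> \<open>UZ y = {}\<close> False m
          by (auto simp: UZ_snoc_T UO_snoc_T UZ_snoc_T' UO_snoc_T' insert_commute)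
      qed
    next
      case False
      have mx: "Max (insert 0 (Suc ` UZ y)) = Suc (Max (UZ y))"
        using False by (simp add: Max_Suc_image max_def)
      show ?thesis using snoc \<open>b\<close> False mx
        by (auto simp: UZ_snoc_T UO_snoc_T UZ_snoc_T' UO_snoc_T' Max_Suc_image Suc_image_diff)
    qed
  qed
qed

lemma UZ_cons_T: "UZ (True # x) = Suc ` UZ x" using cons_T_formulas by blast
lemma UO_cons_T: "UO (True # x) = insert 0 (Suc ` UO x)" using cons_T_formulas by blast
lemma UZ_cons_F: "UZ (False # x) = (if UO x = {} then insert 0 (Suc ` UZ x) else Suc ` UZ x)"
  using cons_F_formulas by blast
lemma UO_cons_F: "UO (False # x) = Suc ` (UO x - {Min (UO x)})"
  using cons_F_formulas by blast

lemma up_cons_T: "gk_up (True # x) = map_option (Cons True) (gk_up x)"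
  by (simp add: gk_up_def UZ_cons_T Min_Suc_image)

lemma up_cons_F1: "UO x \<noteq> {} \<Longrightarrow> gk_up (False # x) = map_option (Cons False) (gk_up x)"
  by (simp add: gk_up_def UZ_cons_F Min_Suc_image)

lemma up_cons_F0: "UO x = {} \<Longrightarrow> gk_up (False # x) = Some (True # x)"
proof -
  assume a: "UO x = {}"
  have "Min (insert 0 (Suc ` UZ x)) = 0" by (intro Min_eqI) auto
  then show ?thesis using a by (simp add: gk_up_def UZ_cons_F)
qed

definition upchain :: "nat \<Rightarrow> bool list list \<Rightarrow> bool" where
  "upchain m c \<longleftrightarrow> c \<noteq> [] \<and> (\<forall>v\<in>set c. length v = m) \<and> UO (hd c) = {} \<and> UZ (last c) = {}
     \<and> successively (\<lambda>x y. gk_up x = Some y) c"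

definition cA :: "bool list list \<Rightarrow> bool list list" where
  "cA u = map (\<lambda>v. v @ [False]) u @ [last u @ [True]]"
definition cB :: "bool list list \<Rightarrow> bool list list" where
  "cB u = map (\<lambda>v. v @ [True]) (butlast u)"
definition pA :: "bool list list \<Rightarrow> bool list list" where
  "pA u = (False # hd u) # map (Cons True) u"
definition pB :: "bool list list \<Rightarrow> bool list list" where
  "pB u = map (Cons False) (tl u)"

lemma up_ne: "gk_up x = Some y \<Longrightarrow> UZ x \<noteq> {}"
  by (auto simp: gk_up_def split: if_splits)

lemma up_F: "gk_up x = Some y \<Longrightarrow> gk_up (x @ [False]) = Some (y @ [False])"
  by (simp add: up_snoc_F gk_up_None[symmetric])

lemma up_T: assumes "gk_up x = Some y" "UZ y \<noteq> {}" shows "gk_up (x @ [True]) = Some (y @ [True])"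
proof -
  have uz: "UZ y = UZ x - {Min (UZ x)}" using up_step[OF assms(1)] by simp
  from assms(2) obtain k where k: "k \<in> UZ x" "k \<noteq> Min (UZ x)" unfolding uz by auto
  have ne: "UZ x \<noteq> {}" using k by auto
  have "Min (UZ x) \<le> k" using k by simp
  hence "Min (UZ x) < k" using k(2) by (metis le_neq_implies_less)
  also have "k \<le> Max (UZ x)" using k by simp
  finally have "Min (UZ x) \<in> UZ x - {Max (UZ x)}" using Min_in[OF finite_UZ ne] by auto
  hence "UZ x - {Max (UZ x)} \<noteq> {}" by auto
  then show ?thesis using assms(1) by (simp add: up_snoc_T)
qed

lemma upchain_step: "upchain m u \<Longrightarrow> Suc i < length u \<Longrightarrow> gk_up (u ! i) = Some (u ! Suc i)"
proof -
  assume a: "upchain m u" "Suc i < length u"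
  then have "successively (\<lambda>x y. gk_up x = Some y) u" by (simp add: upchain_def)
  from successively_nth[OF this a(2)] show ?thesis by simp
qed

lemma upchain_hd: "upchain m u \<Longrightarrow> UO (u ! 0) = {}"
  unfolding upchain_def by (metis hd_conv_nth)

lemma upchain_last: "upchain m u \<Longrightarrow> UZ (u ! (length u - 1)) = {}"
  unfolding upchain_def by (metis last_conv_nth)

lemma upchain_len: "upchain m u \<Longrightarrow> v \<in> set u \<Longrightarrow> length v = m"
  unfolding upchain_def by simp

lemma upchain_UZ: "upchain m u \<Longrightarrow> Suc i < length u \<Longrightarrow> UZ (u ! i) \<noteq> {}"
  using upchain_step up_ne by blast

lemma upchain_UO: "upchain m u \<Longrightarrow> 0 < i \<Longrightarrow> i < length u \<Longrightarrow> UO (u ! i) \<noteq> {}"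
proof -
  assume a: "upchain m u" "0 < i" "i < length u"
  then obtain k where k: "i = Suc k" by (cases i) auto
  have "gk_up (u ! k) = Some (u ! i)" using upchain_step[OF a(1)] a k by simp
  then show ?thesis using up_step by blast
qed

lemma upchain_UO1: "upchain m u \<Longrightarrow> 1 < length u \<Longrightarrow> \<exists>a. UO (u ! 1) = {a}"
proof -
  assume a: "upchain m u" "1 < length u"
  have "gk_up (u ! 0) = Some (u ! 1)" using upchain_step[OF a(1), of 0] a by simp
  moreover have "UO (u ! 0) = {}" using a(1) by (rule upchain_hd)
  ultimately show ?thesis using up_step by fastforce
qed

lemma upchain_UZ_prelast: "upchain m u \<Longrightarrow> Suc (Suc k) = length u \<Longrightarrow> \<exists>a. UZ (u ! k) = {a}"
proof -
  assume a: "upchain m u" "Suc (Suc k) = length u"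
  have st: "gk_up (u ! k) = Some (u ! Suc k)" using upchain_step[OF a(1), of k] a by simp
  have "UZ (u ! Suc k) = {}" using upchain_last[OF a(1)] a(2) by (metis diff_Suc_1)
  hence e: "UZ (u ! k) - {Min (UZ (u ! k))} = {}" using up_step[OF st] by simp
  have "UZ (u ! k) \<noteq> {}" using up_ne[OF st] .
  then show ?thesis using e by blast
qed

lemma cA_up: assumes "upchain m u" shows "upchain (Suc m) (cA u)"
proof -
  have ne: "u \<noteq> []" and l: "\<forall>v\<in>set u. length v = m" and h: "UO (hd u) = {}" and t: "UZ (last u) = {}"
    and s: "successively (\<lambda>x y. gk_up x = Some y) u" using assms unfolding upchain_def by auto
  have s1: "successively (\<lambda>x y. gk_up x = Some y) (map (\<lambda>v. v @ [False]) u)"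
    unfolding successively_map using s by (rule successively_mono) (simp add: up_F)
  have j: "gk_up (last u @ [False]) = Some (last u @ [True])" using t by (simp add: up_snoc_F)
  show ?thesis unfolding upchain_def cA_def using ne l h t s1 j
    by (auto simp: successively_append_iff UO_snoc_F UZ_snoc_T last_map hd_map)
qed

lemma cB_up: assumes "upchain m u" "2 \<le> length u" shows "upchain (Suc m) (cB u)"
proof -
  have ne: "u \<noteq> []" and l: "\<forall>v\<in>set u. length v = m" and h: "UO (hd u) = {}"
    using assms unfolding upchain_def by auto
  have bne: "butlast u \<noteq> []" using assms by (cases u) auto
  have hd: "hd (butlast u) = u ! 0" using assms by (simp add: hd_conv_nth nth_butlast bne)
  have uz0: "UZ (u ! 0) \<noteq> {}" using upchain_UZ[OF assms(1), of 0] assms by simp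
  have hd0: "UO (u ! 0) = {}" using h ne by (simp add: hd_conv_nth)
  obtain k where k: "Suc (Suc k) = length u" using assms by (metis add_2_eq_Suc le_iff_add)
  have lb: "last (butlast u) = u ! k"
  proof -
    have "length (butlast u) = Suc k" using k by simp
    then have "last (butlast u) = butlast u ! k" using bne by (simp add: last_conv_nth)
    also have "\<dots> = u ! k" using k by (simp add: nth_butlast)
    finally show ?thesis .
  qed
  obtain a where a: "UZ (u ! k) = {a}" using upchain_UZ_prelast[OF assms(1) k] by blast
  have s: "successively (\<lambda>x y. gk_up x = Some y) (map (\<lambda>v. v @ [True]) (butlast u))"
  proof (unfold successively_conv_nth, intro allI impI)
    fix i assume i: "Suc i < length (map (\<lambda>v. v @ [True]) (butlast u))"
    hence i2: "Suc (Suc i) < length u" by simp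
    have "gk_up (u ! i) = Some (u ! Suc i)" using upchain_step[OF assms(1)] i2 by simp
    moreover have "UZ (u ! Suc i) \<noteq> {}" using upchain_UZ[OF assms(1)] i2 by simp
    ultimately have "gk_up (u ! i @ [True]) = Some (u ! Suc i @ [True])" by (rule up_T)
    moreover have l1: "i < length (butlast u)" "Suc i < length (butlast u)" using i2 by auto
    moreover have "map (\<lambda>v. v @ [True]) (butlast u) ! i = u ! i @ [True]"
      "map (\<lambda>v. v @ [True]) (butlast u) ! Suc i = u ! Suc i @ [True]"
      using nth_butlast[OF l1(1)] nth_butlast[OF l1(2)] l1 by simp_all
    ultimately show "gk_up (map (\<lambda>v. v @ [True]) (butlast u) ! i) = Some (map (\<lambda>v. v @ [True]) (butlast u) ! Suc i)"
      using i2 by simp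
  qed
  have lbu: "\<forall>v\<in>set (butlast u). length v = m" using l by (meson in_set_butlastD)
  show ?thesis unfolding upchain_def cB_def using bne hd uz0 hd0 lb a s lbu
    by (auto simp: UO_snoc_T UZ_snoc_T last_map hd_map)
qed

lemma pA_up: assumes "upchain m u" shows "upchain (Suc m) (pA u)"
proof -
  have ne: "u \<noteq> []" and l: "\<forall>v\<in>set u. length v = m" and h: "UO (hd u) = {}" and t: "UZ (last u) = {}"
    and s: "successively (\<lambda>x y. gk_up x = Some y) u" using assms unfolding upchain_def by auto
  have s1: "successively (\<lambda>x y. gk_up x = Some y) (map (Cons True) u)"
    unfolding successively_map using s by (rule successively_mono) (simp add: up_cons_T)
  have j: "gk_up (False # hd u) = Some (True # hd u)" using h by (rule up_cons_F0)
  show ?thesis unfolding upchain_def pA_def using ne l h t s1 j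
    by (auto simp: successively_Cons UO_cons_F UZ_cons_T last_map hd_map)
qed

lemma pB_up: assumes "upchain m u" "2 \<le> length u" shows "upchain (Suc m) (pB u)"
proof -
  have ne: "u \<noteq> []" and l: "\<forall>v\<in>set u. length v = m" and t: "UZ (last u) = {}"
    using assms unfolding upchain_def by auto
  have tne: "tl u \<noteq> []" using assms by (cases u) auto
  have hd: "hd (tl u) = u ! 1" using tne by (cases u) (auto simp: hd_conv_nth)
  obtain a where a: "UO (u ! 1) = {a}" using upchain_UO1[OF assms(1)] assms by auto
  have lt: "last (tl u) = last u" using tne by (simp add: last_tl)
  have uol: "UO (last u) \<noteq> {}" using upchain_UO[OF assms(1), of "length u - 1"] assms ne
    by (simp add: last_conv_nth)
  have s: "successively (\<lambda>x y. gk_up x = Some y) (map (Cons False) (tl u))"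
  proof (unfold successively_conv_nth, intro allI impI)
    fix i assume i: "Suc i < length (map (Cons False) (tl u))"
    hence i2: "Suc (Suc i) < length u" by simp
    have "gk_up (u ! Suc i) = Some (u ! Suc (Suc i))" using upchain_step[OF assms(1)] i2 by simp
    moreover have "UO (u ! Suc i) \<noteq> {}" using upchain_UO[OF assms(1)] i2 by simp
    ultimately have "gk_up (False # u ! Suc i) = Some (False # u ! Suc (Suc i))"
      by (simp add: up_cons_F1)
    then show "gk_up (map (Cons False) (tl u) ! i) = Some (map (Cons False) (tl u) ! Suc i)"
      using i2 by (simp add: nth_tl)
  qed
  have ltu: "\<forall>v\<in>set (tl u). length v = m" using l by (meson list.set_sel(2) ne)
  show ?thesis unfolding upchain_def pB_def using tne hd a lt t uol s ltu
    by (auto simp: UO_cons_F UZ_cons_F last_map hd_map)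
qed

lemma chain_len_aux:
  "u \<noteq> [] \<Longrightarrow> successively (\<lambda>x y. gk_up x = Some y) u \<Longrightarrow> UZ (last u) = {} \<Longrightarrow>
   length u = Suc (card (UZ (hd u)))"
proof (induction u)
  case Nil
  then show ?case by simp
next
  case (Cons x u)
  show ?case
  proof (cases u)
    case Nil
    then show ?thesis using Cons by simp
  next
    case (Cons y w)
    have st: "gk_up x = Some y" using Cons.prems \<open>u = y # w\<close> by simp
    have ne: "UZ x \<noteq> {}" using up_ne[OF st] .
    have "card (UZ y) = card (UZ x) - 1" using up_step[OF st] ne by simp
    moreover have "card (UZ x) \<ge> 1" using ne by (simp add: Suc_leI card_gt_0_iff)
    moreover have "length u = Suc (card (UZ (hd u)))"
      using Cons.IH Cons.prems \<open>u = y # w\<close> by simp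
    ultimately show ?thesis using \<open>u = y # w\<close> by simp
  qed
qed

lemma upchain_length: "upchain m u \<Longrightarrow> length u = Suc (card (UZ (hd u)))"
  unfolding upchain_def using chain_len_aux by blast

lemma upchain_parity: "upchain m u \<Longrightarrow> even (length u + m + 1)"
proof -
  assume a: "upchain m u"
  have "even (card (UZ (hd u)) + card (UO (hd u)) + length (hd u))" by (rule card_parity)
  moreover have "UO (hd u) = {}" "length (hd u) = m" using a unfolding upchain_def by auto
  ultimately show ?thesis using upchain_length[OF a] by simp
qed

definition diffs :: "bool list \<Rightarrow> bool list \<Rightarrow> nat set" where
  "diffs x y = {i. i < length x \<and> x ! i \<noteq> y ! i}"

lemma adj_diffs: "cube_adj x y \<longleftrightarrow> length x = length y \<and> card (diffs x y) = 1"
  by (simp add: cube_adj_def diffs_def)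

lemma up_adj: "gk_up x = Some y \<Longrightarrow> cube_adj x y"
proof -
  assume a: "gk_up x = Some y"
  let ?j = "Min (UZ x)"
  have ne: "UZ x \<noteq> {}" using up_ne[OF a] .
  have y: "y = x[?j := True]" using a ne by (simp add: gk_up_def)
  have j: "?j < length x" "x ! ?j = False" using Min_in[OF finite_UZ ne] UZ_lt UZ_val by auto
  have "diffs x y = {?j}" using j by (auto simp: diffs_def y nth_list_update)
  then show ?thesis by (simp add: adj_diffs y)
qed

lemma adj_sym: "cube_adj x y \<Longrightarrow> cube_adj y x"
proof -
  assume a: "cube_adj x y"
  hence l: "length x = length y" by (simp add: adj_diffs)
  have "diffs y x = diffs x y" using l unfolding diffs_def by (rule_tac Collect_cong) auto
  then show ?thesis using a l by (simp add: adj_diffs)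
qed

lemma adj_snoc_same: "cube_adj x y \<Longrightarrow> cube_adj (x @ [a]) (y @ [a])"
proof -
  assume a: "cube_adj x y"
  hence l: "length x = length y" by (simp add: adj_diffs)
  have "diffs (x @ [a]) (y @ [a]) = diffs x y"
    using l unfolding diffs_def by (auto simp: nth_append less_Suc_eq)
  then show ?thesis using a l by (simp add: adj_diffs)
qed

lemma adj_snoc_diff: "a \<noteq> b \<Longrightarrow> cube_adj (x @ [a]) (x @ [b])"
proof -
  assume a: "a \<noteq> b"
  have "diffs (x @ [a]) (x @ [b]) = {length x}"
    using a unfolding diffs_def by (auto simp: nth_append less_Suc_eq)
  then show ?thesis by (simp add: adj_diffs)
qed

lemma adj_cons_same: "cube_adj x y \<Longrightarrow> cube_adj (a # x) (a # y)"
proof -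
  assume a: "cube_adj x y"
  hence l: "length x = length y" by (simp add: adj_diffs)
  have "diffs (a # x) (a # y) = Suc ` diffs x y"
  proof (rule set_eqI)
    fix i show "i \<in> diffs (a # x) (a # y) \<longleftrightarrow> i \<in> Suc ` diffs x y"
    proof (cases i)
      case 0
      then show ?thesis by (auto simp: diffs_def)
    next
      case (Suc j)
      have "Suc j \<in> Suc ` S \<longleftrightarrow> j \<in> S" for S by auto
      then show ?thesis using Suc by (simp add: diffs_def)
    qed
  qed
  moreover have "card (Suc ` diffs x y) = card (diffs x y)" by (simp add: card_image)
  ultimately show ?thesis using a l by (simp add: adj_diffs)
qed

lemma adj_cons_diff: "a \<noteq> b \<Longrightarrow> cube_adj (a # x) (b # x)"
proof -
  assume a: "a \<noteq> b"
  have "diffs (a # x) (b # x) = {0}"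
  proof (rule set_eqI)
    fix i show "i \<in> diffs (a # x) (b # x) \<longleftrightarrow> i \<in> {0}"
      using a by (cases i) (auto simp: diffs_def)
  qed
  then show ?thesis by (simp add: adj_diffs)
qed

lemma upchain_adj: "upchain m u \<Longrightarrow> successively cube_adj u"
  unfolding upchain_def by (auto elim: successively_mono intro: up_adj)

definition orient :: "bool \<Rightarrow> 'a list \<Rightarrow> 'a list" where
  "orient q c = (if q then c else rev c)"

lemma orient_True[simp]: "orient True = (\<lambda>c. c)"
  by (simp add: orient_def fun_eq_iff)
lemma orient_False[simp]: "orient False = rev"
  by (simp add: orient_def fun_eq_iff)

lemma orient_orient[simp]: "orient q (orient q c) = c"
  by (simp add: orient_def)
lemma set_orient[simp]: "set (orient q c) = set c"
  by (simp add: orient_def)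
lemma length_orient[simp]: "length (orient q c) = length c"
  by (simp add: orient_def)
lemma orient_Nil_iff[simp]: "orient q c = [] \<longleftrightarrow> c = []"
  by (simp add: orient_def)
lemma orient_concat: "orient q (concat xs) = concat (map (orient q) (orient q xs))"
  by (cases q) (simp_all add: rev_concat)

lemma succ_adj_rev: "successively cube_adj x \<Longrightarrow> successively cube_adj (rev x)"
  by (simp add: successively_rev) (erule successively_mono, simp add: adj_sym)
lemma succ_adj_orient: "successively cube_adj x \<Longrightarrow> successively cube_adj (orient q x)"
  by (cases q) (auto simp del: successively_rev intro: succ_adj_rev)

lemma succ_concat_junction:
  "(\<forall>c\<in>set cs. c \<noteq> []) \<Longrightarrow> successively R (concat cs) \<Longrightarrow> successively (\<lambda>a b. R (last a) (hd b)) cs"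
proof (induction cs)
  case Nil
  then show ?case by simp
next
  case (Cons a cs)
  show ?case
  proof (cases cs)
    case Nil
    then show ?thesis by simp
  next
    case (Cons b rest)
    have "successively R (a @ concat cs)" using Cons.prems by simp
    hence "successively R (concat cs)" "R (last a) (hd (concat cs))"
      using Cons.prems \<open>cs = b # rest\<close> by (auto simp: successively_append_iff)
    moreover have "hd (concat cs) = hd b" using Cons.prems \<open>cs = b # rest\<close> by simp
    ultimately show ?thesis using Cons.IH Cons.prems \<open>cs = b # rest\<close> by simp
  qed
qed

definition mA :: "bool list list \<Rightarrow> bool list list" where "mA u = pA (cA u)"
definition mB :: "bool list list \<Rightarrow> bool list list" where "mB u = pB (cA u)"
definition mD :: "bool list list \<Rightarrow> bool list list" where "mD u = pA (cB u)"
definition mE :: "bool list list \<Rightarrow> bool list list" where "mE u = pB (cB u)"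

lemma mA_eq: "u \<noteq> [] \<Longrightarrow> mA u = (False # hd u @ [False]) # map (\<lambda>v. True # v @ [False]) u @ [True # last u @ [True]]"
  by (simp add: mA_def pA_def cA_def hd_map)
lemma mB_eq: "u \<noteq> [] \<Longrightarrow> mB u = map (\<lambda>v. False # v @ [False]) (tl u) @ [False # last u @ [True]]"
  by (cases u) (simp_all add: mB_def pB_def cA_def)
lemma mD_eq: "2 \<le> length u \<Longrightarrow> mD u = (False # hd u @ [True]) # map (\<lambda>v. True # v @ [True]) (butlast u)"
proof -
  assume a: "2 \<le> length u"
  hence "butlast u \<noteq> []" by (cases u) auto
  moreover have "hd (butlast u) = hd u" using a by (cases u) auto
  ultimately show ?thesis by (simp add: mD_def pA_def cB_def hd_map)
qed
lemma mE_eq: "mE u = map (\<lambda>v. False # v @ [True]) (tl (butlast u))"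
  by (simp add: mE_def pB_def cB_def map_tl comp_def)

definition mQL :: "bool list list \<Rightarrow> bool list list list" where
  "mQL u = (if length u = 1 then [mB u] else [mD u, rev (mE u), mB u])"

lemma mix_upchains:
  assumes "upchain m u"
  shows "upchain (Suc (Suc m)) (mA u)" "upchain (Suc (Suc m)) (mB u)"
    "2 \<le> length u \<Longrightarrow> upchain (Suc (Suc m)) (mD u)"
    "3 \<le> length u \<Longrightarrow> upchain (Suc (Suc m)) (mE u)"
proof -
  have ne: "u \<noteq> []" using assms by (simp add: upchain_def)
  show "upchain (Suc (Suc m)) (mA u)" unfolding mA_def by (intro pA_up cA_up assms)
  have "1 \<le> length u" using ne by (cases u) auto
  hence "2 \<le> length (cA u)" by (simp add: cA_def)
  then show "upchain (Suc (Suc m)) (mB u)" unfolding mB_def by (intro pB_up cA_up assms)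
  show "2 \<le> length u \<Longrightarrow> upchain (Suc (Suc m)) (mD u)" unfolding mD_def by (intro pA_up cB_up assms)
  assume l3: "3 \<le> length u"
  have "2 \<le> length (cB u)" using l3 by (simp add: cB_def)
  then show "upchain (Suc (Suc m)) (mE u)" unfolding mE_def using l3
    by (intro pB_up cB_up assms) auto
qed

lemma mix_len_odd: "upchain m u \<Longrightarrow> even m \<Longrightarrow> length u = 1 \<or> 3 \<le> length u"
proof -
  assume a: "upchain m u" "even m"
  have "even (length u + m + 1)" using upchain_parity[OF a(1)] .
  hence "odd (length u)" using a(2) by simp
  moreover have "length u \<noteq> 0" using a(1) by (simp add: upchain_def)
  ultimately show ?thesis by presburger
qed

lemma mQL_props:
  assumes "upchain m u" "even m"
  shows "successively cube_adj (concat (mQL u))"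
    "concat (mQL u) \<noteq> []"
    "hd (concat (mQL u)) = False # hd u @ [True]"
    "last (concat (mQL u)) = False # last u @ [True]"
proof -
  have ne: "u \<noteq> []" using assms by (simp add: upchain_def)
  consider (one) "length u = 1" | (three) "3 \<le> length u" using mix_len_odd[OF assms] by blast
  then have "successively cube_adj (concat (mQL u)) \<and> concat (mQL u) \<noteq> [] \<and>
    hd (concat (mQL u)) = False # hd u @ [True] \<and> last (concat (mQL u)) = False # last u @ [True]"
  proof cases
    case one
    then obtain v where u: "u = [v]" by (cases u) auto
    show ?thesis by (simp add: mQL_def u mB_eq)
  next
    case three
    have uD: "upchain (Suc (Suc m)) (mD u)" and uE: "upchain (Suc (Suc m)) (mE u)"
      and uB: "upchain (Suc (Suc m)) (mB u)" using mix_upchains[OF assms(1)] three by auto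
    have sD: "successively cube_adj (mD u)" using upchain_adj[OF uD] .
    have sE: "successively cube_adj (rev (mE u))" using succ_adj_rev[OF upchain_adj[OF uE]] .
    have sB: "successively cube_adj (mB u)" using upchain_adj[OF uB] .
    have bne: "butlast u \<noteq> []" and tbne: "tl (butlast u) \<noteq> []" and tne: "tl u \<noteq> []"
      using three by (cases u; cases "tl u"; auto)+
    have h1: "hd (tl (butlast u)) = hd (tl u)" using three by (cases u; cases "tl u"; auto)
    have l1: "last (tl (butlast u)) = last (butlast u)" using tbne by (simp add: last_tl)
    have j1: "cube_adj (last (mD u)) (hd (rev (mE u)))"
      using bne tbne l1 three by (simp add: mD_eq mE_eq last_map hd_rev adj_cons_diff)
    have j2: "cube_adj (last (rev (mE u))) (hd (mB u))"
      using tbne tne h1 ne by (simp add: mE_eq mB_eq last_rev hd_map adj_cons_same adj_snoc_diff)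
    have mQ: "mQL u = [mD u, rev (mE u), mB u]" using three by (simp add: mQL_def)
    have neE: "rev (mE u) \<noteq> []" using tbne by (simp add: mE_eq)
    have neD: "mD u \<noteq> []" using three by (simp add: mD_eq)
    have neB: "mB u \<noteq> []" using ne by (simp add: mB_eq)
    have "successively cube_adj (rev (mE u) @ mB u)"
      using sE sB j2 by (simp add: successively_append_iff)
    moreover have "hd (rev (mE u) @ mB u) = hd (rev (mE u))" using neE by simp
    ultimately have "successively cube_adj (mD u @ rev (mE u) @ mB u)"
      using sD j1 by (simp add: successively_append_iff)
    moreover have "hd (mD u) = False # hd u @ [True]" using three by (simp add: mD_eq)
    moreover have "last (mB u) = False # last u @ [True]" using ne by (simp add: mB_eq)
    ultimately show ?thesis using mQ neD neB neE by simp
  qed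
  then show "successively cube_adj (concat (mQL u))" "concat (mQL u) \<noteq> []"
    "hd (concat (mQL u)) = False # hd u @ [True]" "last (concat (mQL u)) = False # last u @ [True]"
    by auto
qed

lemma mix_length:
  assumes "upchain m u" "even m"
  shows "length (mA u) + length (concat (mQL u)) = 4 * length u"
proof -
  have ne: "u \<noteq> []" using assms by (simp add: upchain_def)
  consider (one) "length u = 1" | (three) "3 \<le> length u" using mix_len_odd[OF assms] by blast
  then show ?thesis
  proof cases
    case one
    then show ?thesis using ne by (simp add: mQL_def mA_eq mB_eq)
  next
    case three
    then show ?thesis using ne by (simp add: mQL_def mA_eq mB_eq mD_eq mE_eq)
  qed
qed

lemma mix_cover:
  assumes "upchain m u" "even m" "v \<in> set u"
  shows "a # v @ [b] \<in> set (mA u) \<union> set (concat (mQL u))"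
proof -
  have ne: "u \<noteq> []" using assms by (simp add: upchain_def)
  have hdtl: "v = hd u \<or> v \<in> set (tl u)" using assms(3) ne by (cases u) auto
  have lastbl: "v = last u \<or> v \<in> set (butlast u)" using assms(3) ne
    by (metis append_butlast_last_id butlast.simps(2) in_set_butlast_appendI last_ConsL last_in_set list.sel(3) rotate1.simps(2) set_ConsD set_rotate1 snoc_eq_iff_butlast)
  consider (one) "length u = 1" | (three) "3 \<le> length u" using mix_len_odd[OF assms(1,2)] by blast
  then show ?thesis
  proof cases
    case one
    then obtain w where u: "u = [w]" by (cases u) auto
    then have "v = w" using assms(3) by simp
    then show ?thesis using u by (cases a; cases b) (auto simp: mQL_def mA_eq mB_eq)
  next
    case three
    let ?S = "set (mA u) \<union> set (concat (mQL u))"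
    have mQ: "mQL u = [mD u, rev (mE u), mB u]" using three by (simp add: mQL_def)
    have inA: "set (mA u) \<subseteq> ?S" by blast
    have inD: "set (mD u) \<subseteq> ?S" unfolding mQ by auto
    have inE: "set (mE u) \<subseteq> ?S" unfolding mQ by auto
    have inB: "set (mB u) \<subseteq> ?S" unfolding mQ by auto
    have mid: "v = hd u \<or> v = last u \<or> v \<in> set (tl (butlast u))"
    proof -
      { assume "v \<noteq> hd u" "v \<noteq> last u"
        hence "v \<in> set (tl u)" using hdtl by auto
        moreover have "tl u \<noteq> []" using three by (cases u) auto
        ultimately have "v \<in> set (butlast (tl u)) \<or> v = last (tl u)"
          by (metis append_butlast_last_id in_set_butlast_appendI rotate1.simps(2) set_ConsD set_rotate1 snoc_eq_iff_butlast)
        moreover have "last (tl u) = last u" using \<open>tl u \<noteq> []\<close> by (simp add: last_tl)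
        ultimately have "v \<in> set (tl (butlast u))" using \<open>v \<noteq> last u\<close> by (simp add: butlast_tl) }
      then show ?thesis by blast
    qed
    show ?thesis
    proof (cases a)
      case a: True
      show ?thesis
      proof (cases b)
        case True
        show ?thesis
        proof (cases "v = last u")
          case True
          then have "a # v @ [b] \<in> set (mA u)" using a \<open>b\<close> ne by (simp add: mA_eq)
          then show ?thesis by blast
        next
          case False
          then have "v \<in> set (butlast u)" using lastbl by simp
          then have "a # v @ [b] \<in> set (mD u)" using a \<open>b\<close> three by (simp add: mD_eq)
          then show ?thesis using inD by blast
        qed
      next
        case False
        then have "a # v @ [b] \<in> set (mA u)" using a ne assms(3) by (simp add: mA_eq)
        then show ?thesis by blast
      qed
    next
      case a: False
      show ?thesis
      proof (cases b)
        case True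
        show ?thesis
        proof (cases "v = hd u")
          case True
          then have "a # v @ [b] \<in> set (mD u)" using a \<open>b\<close> three by (simp add: mD_eq)
          then show ?thesis using inD by blast
        next
          case nh: False
          show ?thesis
          proof (cases "v = last u")
            case True
            then have "a # v @ [b] \<in> set (mB u)" using a \<open>b\<close> ne by (simp add: mB_eq)
            then show ?thesis using inB by blast
          next
            case False
            then have "v \<in> set (tl (butlast u))" using mid nh by simp
            then have "a # v @ [b] \<in> set (mE u)" using a \<open>b\<close> by (simp add: mE_eq)
            then show ?thesis using inE by blast
          qed
        qed
      next
        case False
        show ?thesis
        proof (cases "v = hd u")
          case True
          then have "a # v @ [b] \<in> set (mA u)" using a \<open>\<not> b\<close> ne by (simp add: mA_eq)
          then show ?thesis by blast
        next
          case nh: False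
          then have "v \<in> set (tl u)" using hdtl by simp
          then have "a # v @ [b] \<in> set (mB u)" using a \<open>\<not> b\<close> ne by (simp add: mB_eq)
          then show ?thesis using inB by blast
        qed
      qed
    qed
  qed
qed

definition emb :: "bool \<Rightarrow> bool list \<Rightarrow> bool list" where
  "emb q v = (if q then False # v @ [False] else True # v @ [True])"

lemma emb_adj: "cube_adj x y \<Longrightarrow> cube_adj (emb q x) (emb q y)"
  by (simp add: emb_def adj_cons_same adj_snoc_same)
lemma emb_adj_mid: "cube_adj (emb q x) (False # x @ [True])"
  by (cases q) (simp_all add: emb_def adj_cons_same adj_snoc_diff adj_cons_diff)

definition Pc :: "bool \<Rightarrow> bool list list \<Rightarrow> bool list list" where
  "Pc p c = orient p (mA (orient p c))"
definition Qc :: "bool \<Rightarrow> bool list list \<Rightarrow> bool list list" where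
  "Qc p c = orient p (concat (mQL (orient p c)))"
definition RB :: "bool \<Rightarrow> bool list list \<Rightarrow> bool list list list" where
  "RB p c = map (orient (\<not> p)) (orient (\<not> p) (mQL (orient p c)))"

fun mixP :: "bool \<Rightarrow> bool list list list \<Rightarrow> bool list list list" where
  "mixP p [] = []" | "mixP p (c # cs) = Pc p c # mixP (\<not> p) cs"
fun mixQ :: "bool \<Rightarrow> bool list list list \<Rightarrow> bool list list list" where
  "mixQ p [] = []" | "mixQ p (c # cs) = mixQ (\<not> p) cs @ RB p c"
fun QT :: "bool \<Rightarrow> bool list list list \<Rightarrow> bool list list" where
  "QT p [] = []" | "QT p (c # cs) = Qc p c @ QT (\<not> p) cs"
fun alt :: "nat \<Rightarrow> bool \<Rightarrow> bool list list list \<Rightarrow> bool" where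
  "alt m p [] = True" | "alt m p (c # cs) = (upchain m (orient p c) \<and> alt m (\<not> p) cs)"

lemma alt_nonempty: "alt m p cs \<Longrightarrow> c \<in> set cs \<Longrightarrow> c \<noteq> []"
  by (induction m p cs rule: alt.induct) (auto simp: upchain_def)

lemma alt_append: "alt m p (xs @ ys) \<longleftrightarrow> alt m p xs \<and> alt m (if even (length xs) then p else \<not> p) ys"
  by (induction xs arbitrary: p) auto

lemma Pc_props:
  assumes "upchain m (orient p c)"
  shows "successively cube_adj (Pc p c) \<and> Pc p c \<noteq> [] \<and> hd (Pc p c) = emb p (hd c) \<and> last (Pc p c) = emb (\<not> p) (last c)"
proof -
  let ?u = "orient p c"
  have ne: "?u \<noteq> []" using assms by (simp add: upchain_def)
  have s: "successively cube_adj (mA ?u)" using upchain_adj[OF mix_upchains(1)[OF assms]] .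
  have sP: "successively cube_adj (Pc p c)" unfolding Pc_def using succ_adj_orient[OF s] .
  have "Pc p c \<noteq> [] \<and> hd (Pc p c) = emb p (hd c) \<and> last (Pc p c) = emb (\<not> p) (last c)"
  proof (cases p)
    case True
    then show ?thesis using ne by (simp add: Pc_def mA_eq emb_def)
  next
    case False
    have ne': "c \<noteq> []" using ne by simp
    then show ?thesis using ne False
      by (simp add: Pc_def mA_eq emb_def hd_rev last_rev)
  qed
  then show ?thesis using sP by simp
qed

lemma Qc_props:
  assumes "upchain m (orient p c)" "even m"
  shows "successively cube_adj (Qc p c) \<and> Qc p c \<noteq> [] \<and> hd (Qc p c) = False # hd c @ [True] \<and> last (Qc p c) = False # last c @ [True]"
proof -
  let ?u = "orient p c"
  have ne: "?u \<noteq> []" using assms by (simp add: upchain_def)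
  note q = mQL_props[OF assms]
  have sQ: "successively cube_adj (Qc p c)" unfolding Qc_def using succ_adj_orient[OF q(1)] .
  have "Qc p c \<noteq> [] \<and> hd (Qc p c) = False # hd c @ [True] \<and> last (Qc p c) = False # last c @ [True]"
  proof (cases p)
    case True
    then show ?thesis using q by (simp add: Qc_def)
  next
    case False
    have ne': "c \<noteq> []" using ne by simp
    then show ?thesis using q False
      by (simp add: Qc_def hd_rev last_rev)
  qed
  then show ?thesis using sQ by simp
qed

lemma RB_concat: "concat (RB p c) = rev (Qc p c)"
  unfolding RB_def Qc_def orient_concat[symmetric] by (cases p) simp_all

lemma RB_alt:
  assumes "upchain m (orient p c)" "even m"
  shows "alt (Suc (Suc m)) (\<not> p) (RB p c) \<and> odd (length (RB p c))"
proof -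
  let ?u = "orient p c"
  note up = mix_upchains[OF assms(1)]
  consider (one) "length ?u = 1" | (three) "3 \<le> length ?u" using mix_len_odd[OF assms] by blast
  then show ?thesis
  proof cases
    case one
    then show ?thesis using up by (cases p) (simp_all add: RB_def mQL_def)
  next
    case three
    then show ?thesis using up by (cases p) (simp_all add: RB_def mQL_def)
  qed
qed

lemma concat_mixQ: "concat (mixQ p cs) = rev (QT p cs)"
  by (induction cs arbitrary: p) (simp_all add: RB_concat)

lemma alt_mixP: "alt m p cs \<Longrightarrow> alt (Suc (Suc m)) p (mixP p cs)"
proof (induction cs arbitrary: p)
  case Nil
  then show ?case by simp
next
  case (Cons c cs)
  have "upchain (Suc (Suc m)) (mA (orient p c))" using Cons.prems by (intro mix_upchains(1)) simp
  then show ?case using Cons by (simp add: Pc_def)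
qed

lemma length_mixP[simp]: "length (mixP p cs) = length cs"
  by (induction cs arbitrary: p) auto

lemma alt_mixQ: "alt m p cs \<Longrightarrow> even m \<Longrightarrow>
  alt (Suc (Suc m)) (if even (length cs) then p else \<not> p) (mixQ p cs) \<and> even (length (mixQ p cs) + length cs)"
proof (induction cs arbitrary: p)
  case Nil
  then show ?case by simp
next
  case (Cons c cs)
  have A: "alt m (\<not> p) cs" using Cons.prems by simp
  have IH0: "alt (Suc (Suc m)) (if even (length cs) then \<not> p else \<not> \<not> p) (mixQ (\<not> p) cs) \<and>
     even (length (mixQ (\<not> p) cs) + length cs)" using Cons.IH[OF A Cons.prems(2)] .
  have IH: "alt (Suc (Suc m)) (if even (length cs) then \<not> p else p) (mixQ (\<not> p) cs)"
    "even (length (mixQ (\<not> p) cs) + length cs)" using IH0 by (cases "even (length cs)"; simp)+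
  have R: "alt (Suc (Suc m)) (\<not> p) (RB p c)" "odd (length (RB p c))"
    using RB_alt[of m p c] Cons.prems by auto
  have e: "(if even (length (mixQ (\<not> p) cs)) then (if even (length cs) then \<not> p else p)
            else \<not> (if even (length cs) then \<not> p else p)) = (\<not> p)"
    using IH(2) by auto
  show ?case using IH R e by (auto simp: alt_append)
qed

lemma PT_track:
  "alt m p cs \<Longrightarrow> cs \<noteq> [] \<Longrightarrow> successively (\<lambda>a b. cube_adj (last a) (hd b)) cs \<Longrightarrow>
   successively cube_adj (concat (mixP p cs)) \<and> concat (mixP p cs) \<noteq> [] \<and>
   hd (concat (mixP p cs)) = emb p (hd (hd cs)) \<and> (\<exists>q. last (concat (mixP p cs)) = emb q (last (last cs)))"
proof (induction cs arbitrary: p)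
  case Nil
  then show ?case by simp
next
  case (Cons c cs)
  have "upchain m (orient p c)" using Cons.prems by simp
  note P = Pc_props[OF this]
  show ?case
  proof (cases cs)
    case Nil
    then show ?thesis using P by auto
  next
    case (Cons c' cs')
    have csne: "cs \<noteq> []" using \<open>cs = c' # cs'\<close> by simp
    have A: "alt m (\<not> p) cs" using Cons.prems by simp
    have J: "successively (\<lambda>a b. cube_adj (last a) (hd b)) cs" using Cons.prems(3) by (cases cs) auto
    note IH = Cons.IH[OF A csne J]
    have j: "cube_adj (last c) (hd (hd cs))" using Cons.prems(3) csne by (simp add: successively_Cons)
    have "cube_adj (last (Pc p c)) (hd (concat (mixP (\<not> p) cs)))" using P IH emb_adj[OF j] by simp
    then show ?thesis using P IH csne by (simp add: successively_append_iff)
  qed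
qed

lemma QT_track:
  "alt m p cs \<Longrightarrow> even m \<Longrightarrow> cs \<noteq> [] \<Longrightarrow> successively (\<lambda>a b. cube_adj (last a) (hd b)) cs \<Longrightarrow>
   successively cube_adj (QT p cs) \<and> QT p cs \<noteq> [] \<and>
   hd (QT p cs) = False # hd (hd cs) @ [True] \<and> last (QT p cs) = False # last (last cs) @ [True]"
proof (induction cs arbitrary: p)
  case Nil
  then show ?case by simp
next
  case (Cons c cs)
  have "upchain m (orient p c)" using Cons.prems by simp
  note P = Qc_props[OF this Cons.prems(2)]
  show ?case
  proof (cases cs)
    case Nil
    then show ?thesis using P by auto
  next
    case (Cons c' cs')
    have csne: "cs \<noteq> []" using \<open>cs = c' # cs'\<close> by simp
    have A: "alt m (\<not> p) cs" using Cons.prems by simp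
    have J: "successively (\<lambda>a b. cube_adj (last a) (hd b)) cs" using Cons.prems(4) by (cases cs) auto
    note IH = Cons.IH[OF A Cons.prems(2) csne J]
    have j: "cube_adj (last c) (hd (hd cs))" using Cons.prems(4) csne by (simp add: successively_Cons)
    have "cube_adj (last (Qc p c)) (hd (QT (\<not> p) cs))" using P IH adj_cons_same[OF adj_snoc_same[OF j]] by simp
    then show ?thesis using P IH csne by (simp add: successively_append_iff)
  qed
qed

lemma mQL_len: "upchain m u \<Longrightarrow> even m \<Longrightarrow> w \<in> set (concat (mQL u)) \<Longrightarrow> length w = Suc (Suc m)"
proof -
  assume a: "upchain m u" "even m" "w \<in> set (concat (mQL u))"
  note up = mix_upchains[OF a(1)]
  consider (one) "length u = 1" | (three) "3 \<le> length u" using mix_len_odd[OF a(1,2)] by blast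
  then show ?thesis
  proof cases
    case one
    then show ?thesis using a(3) up upchain_len by (simp add: mQL_def; blast)
  next
    case three
    then show ?thesis using a(3) up upchain_len by (simp add: mQL_def; blast)
  qed
qed

lemma cover_track:
  "alt m p cs \<Longrightarrow> even m \<Longrightarrow>
   (\<forall>v\<in>set (concat cs). \<forall>a b. a # v @ [b] \<in> set (concat (mixP p cs)) \<union> set (QT p cs)) \<and>
   length (concat (mixP p cs)) + length (QT p cs) = 4 * length (concat cs) \<and>
   (\<forall>w \<in> set (concat (mixP p cs)) \<union> set (QT p cs). length w = Suc (Suc m))"
proof (induction cs arbitrary: p)
  case Nil
  then show ?case by simp
next
  case (Cons c cs)
  let ?u = "orient p c"
  have up: "upchain m ?u" using Cons.prems by simp
  have A: "alt m (\<not> p) cs" using Cons.prems by simp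
  note IH = Cons.IH[OF A Cons.prems(2)]
  have sP: "set (Pc p c) = set (mA ?u)" by (simp add: Pc_def)
  have sQ: "set (Qc p c) = set (concat (mQL ?u))" by (simp add: Qc_def del: set_concat)
  have lP: "length (Pc p c) = length (mA ?u)" by (simp add: Pc_def)
  have lQ: "length (Qc p c) = length (concat (mQL ?u))" by (simp add: Qc_def del: length_concat)
  have c1: "\<forall>v\<in>set c. \<forall>a b. a # v @ [b] \<in> set (Pc p c) \<union> set (Qc p c)"
    using mix_cover[OF up Cons.prems(2)] sP sQ by simp
  have c2: "length (Pc p c) + length (Qc p c) = 4 * length c"
    using mix_length[OF up Cons.prems(2)] lP lQ by simp
  have c3: "\<forall>w \<in> set (Pc p c) \<union> set (Qc p c). length w = Suc (Suc m)"
    using upchain_len[OF mix_upchains(1)[OF up]] mQL_len[OF up Cons.prems(2)] sP sQ by auto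
  have e1: "set (concat (mixP p (c # cs))) \<union> set (QT p (c # cs)) =
    (set (Pc p c) \<union> set (Qc p c)) \<union> (set (concat (mixP (\<not> p) cs)) \<union> set (QT (\<not> p) cs))"
    by auto
  have e2: "set (concat (c # cs)) = set c \<union> set (concat cs)" by simp
  have e3: "length (concat (mixP p (c # cs))) + length (QT p (c # cs)) =
    (length (Pc p c) + length (Qc p c)) + (length (concat (mixP (\<not> p) cs)) + length (QT (\<not> p) cs))"
    by simp
  show ?case unfolding e1 e2 e3 using IH c1 c2 c3 by (simp del: set_concat) blast
qed

lemma card_cube: "card (cube_vertices n) = 2 ^ n"
proof -
  have "cube_vertices n = {xs. set xs \<subseteq> (UNIV :: bool set) \<and> length xs = n}"
    by (auto simp: cube_vertices_def)
  then show ?thesis using card_lists_length_eq[of "UNIV :: bool set" n] by simp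
qed

lemma split_mix: "length w = Suc (Suc m) \<Longrightarrow> \<exists>a v b. w = a # v @ [b] \<and> length v = m"
proof -
  assume l: "length w = Suc (Suc m)"
  then obtain a w' where w: "w = a # w'" by (cases w) auto
  then have "w' \<noteq> []" using l by auto
  then have "w' = butlast w' @ [last w']" by simp
  then show ?thesis using w l by (metis diff_Suc_1 length_Cons length_butlast)
qed

lemma mix_step:
  assumes "even m" "alt m p cs" "cs \<noteq> []" "successively cube_adj (concat cs)"
    "distinct (concat cs)" "set (concat cs) = cube_vertices m"
  defines "cs' \<equiv> mixP p cs @ mixQ p cs"
  shows "alt (Suc (Suc m)) p cs' \<and> cs' \<noteq> [] \<and> successively cube_adj (concat cs') \<and>
    distinct (concat cs') \<and> set (concat cs') = cube_vertices (Suc (Suc m)) \<and>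
    cube_adj (last (concat cs')) (hd (concat cs'))"
proof -
  have nec: "\<forall>c\<in>set cs. c \<noteq> []" using alt_nonempty[OF assms(2)] by blast
  have junc: "successively (\<lambda>a b. cube_adj (last a) (hd b)) cs"
    using succ_concat_junction[OF nec assms(4)] .
  note PT = PT_track[OF assms(2,3) junc]
  note QT = QT_track[OF assms(2,1,3) junc]
  note CV = cover_track[OF assms(2,1)]
  let ?P = "concat (mixP p cs)" and ?Q = "QT p cs"
  have e: "concat cs' = ?P @ rev ?Q" by (simp add: cs'_def concat_mixQ)
  have alt': "alt (Suc (Suc m)) p cs'"
    using alt_mixP[OF assms(2)] alt_mixQ[OF assms(2,1)] by (simp add: cs'_def alt_append)
  obtain q where lq: "last ?P = emb q (last (last cs))" using PT by blast
  have sQ: "successively cube_adj (rev ?Q)" using QT succ_adj_rev by blast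
  have jn: "cube_adj (last ?P) (hd (rev ?Q))" using lq QT emb_adj_mid by (simp add: hd_rev)
  have succ: "successively cube_adj (concat cs')" unfolding e using PT sQ jn
    by (simp add: successively_append_iff del: successively_rev)
  have cl: "cube_adj (last (concat cs')) (hd (concat cs'))" unfolding e using PT QT
    by (simp add: last_rev adj_sym[OF emb_adj_mid])
  have sub: "set (concat cs') \<subseteq> cube_vertices (Suc (Suc m))"
    unfolding e using CV by (auto simp: cube_vertices_def)
  have sup: "cube_vertices (Suc (Suc m)) \<subseteq> set (concat cs')"
  proof
    fix w assume "w \<in> cube_vertices (Suc (Suc m))"
    then have "length w = Suc (Suc m)" by (simp add: cube_vertices_def)
    then obtain a v b where w: "w = a # v @ [b]" "length v = m" using split_mix by blast
    then have "v \<in> set (concat cs)" using assms(6) by (simp add: cube_vertices_def)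
    then have "a # v @ [b] \<in> set ?P \<union> set ?Q" using conjunct1[OF CV] by blast
    then show "w \<in> set (concat cs')" unfolding e w by auto
  qed
  have seteq: "set (concat cs') = cube_vertices (Suc (Suc m))" using sub sup by blast
  have "length (concat cs) = 2 ^ m" using distinct_card[OF assms(5)] assms(6) card_cube by simp
  hence "length (concat cs') = 2 ^ Suc (Suc m)" unfolding e using CV by simp
  hence dist: "distinct (concat cs')" using seteq card_cube by (intro card_distinct) simp
  have "cs' \<noteq> []" using assms(3) by (cases cs) (simp_all add: cs'_def)
  then show ?thesis using alt' succ dist seteq cl by simp
qed

lemma succ_concat_intro:
  "(\<forall>x\<in>set xss. successively R x \<and> x \<noteq> []) \<Longrightarrow> successively (\<lambda>a b. R (last a) (hd b)) xss \<Longrightarrow>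
   successively R (concat xss)"
proof (induction xss)
  case Nil
  then show ?case by simp
next
  case (Cons x xss)
  show ?case
  proof (cases xss)
    case Nil
    then show ?thesis using Cons by simp
  next
    case (Cons y yss)
    have "successively R (concat xss)" using Cons.IH Cons.prems \<open>xss = y # yss\<close> by auto
    moreover have "R (last x) (hd (concat xss))" using Cons.prems \<open>xss = y # yss\<close> by simp
    moreover have "concat xss \<noteq> []" using Cons.prems \<open>xss = y # yss\<close> by simp
    ultimately show ?thesis using Cons.prems by (simp add: successively_append_iff)
  qed
qed

lemma in_set_last_butlast: "v \<in> set xs \<Longrightarrow> v = last xs \<or> v \<in> set (butlast xs)"
  by (induction xs) (auto split: if_splits)

lemma adj_snoc2_same: "cube_adj x y \<Longrightarrow> cube_adj (x @ [a, b]) (y @ [a, b])"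
  using adj_snoc_same[OF adj_snoc_same, of x y a b] by simp
lemma adj_snoc2_diff1: "a \<noteq> a' \<Longrightarrow> cube_adj (x @ [a, b]) (x @ [a', b])"
  using adj_snoc_same[OF adj_snoc_diff, of a a' x b] by simp
lemma adj_snoc2_diff2: "b \<noteq> b' \<Longrightarrow> cube_adj (x @ [a, b]) (x @ [a, b'])"
  using adj_snoc_diff[of b b' "x @ [a]"] by simp

definition aB :: "bool list list \<Rightarrow> bool list list" where "aB u = cB (cA u)"
definition aA :: "bool list list \<Rightarrow> bool list list" where "aA u = cA (cA u)"
definition aD :: "bool list list \<Rightarrow> bool list list" where "aD u = cA (cB u)"
definition aE :: "bool list list \<Rightarrow> bool list list" where "aE u = cB (cB u)"
definition Qg :: "bool list list \<Rightarrow> bool list list" where "Qg u = aE u @ rev (aD u) @ aA u"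
definition QLa :: "bool list list \<Rightarrow> bool list list list" where "QLa u = [aE u, rev (aD u), aA u]"

lemma aB_eq: "aB u = map (\<lambda>v. v @ [False, True]) u"
  by (simp add: aB_def cB_def cA_def comp_def)
lemma aA_eq: "u \<noteq> [] \<Longrightarrow> aA u = map (\<lambda>v. v @ [False, False]) u @ [last u @ [True, False], last u @ [True, True]]"
  by (simp add: aA_def cA_def comp_def)
lemma aD_eq: "2 \<le> length u \<Longrightarrow> aD u = map (\<lambda>v. v @ [True, False]) (butlast u) @ [last (butlast u) @ [True, True]]"
proof -
  assume "2 \<le> length u"
  hence "butlast u \<noteq> []" by (cases u) auto
  then show ?thesis by (simp add: aD_def cA_def cB_def comp_def last_map)
qed
lemma aE_eq: "aE u = map (\<lambda>v. v @ [True, True]) (butlast (butlast u))"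
  by (simp add: aE_def cB_def comp_def map_butlast)

lemma app_len_even: "upchain m u \<Longrightarrow> odd m \<Longrightarrow> 2 \<le> length u"
proof -
  assume a: "upchain m u" "odd m"
  have "even (length u + m + 1)" using upchain_parity[OF a(1)] .
  hence "even (length u)" using a(2) by simp
  moreover have "length u \<noteq> 0" using a(1) by (simp add: upchain_def)
  ultimately show ?thesis by presburger
qed

lemma app_upchains:
  assumes "upchain m u" "2 \<le> length u"
  shows "upchain (Suc (Suc m)) (aB u)" "upchain (Suc (Suc m)) (aA u)" "upchain (Suc (Suc m)) (aD u)"
    "3 \<le> length u \<Longrightarrow> upchain (Suc (Suc m)) (aE u)"
proof -
  have ne: "u \<noteq> []" using assms by (simp add: upchain_def)
  have l: "2 \<le> length (cA u)" using assms by (simp add: cA_def)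
  show "upchain (Suc (Suc m)) (aB u)" unfolding aB_def by (intro cB_up cA_up assms l)
  show "upchain (Suc (Suc m)) (aA u)" unfolding aA_def by (intro cA_up assms)
  show "upchain (Suc (Suc m)) (aD u)" unfolding aD_def by (intro cA_up cB_up assms)
  assume "3 \<le> length u"
  hence "2 \<le> length (cB u)" by (simp add: cB_def)
  then show "upchain (Suc (Suc m)) (aE u)" unfolding aE_def by (intro cB_up assms) simp_all
qed

lemma Qg_props:
  assumes "upchain m u" "2 \<le> length u"
  shows "successively cube_adj (Qg u) \<and> Qg u \<noteq> [] \<and> hd (Qg u) = hd u @ [True, True] \<and> last (Qg u) = last u @ [True, True]"
proof -
  note up = app_upchains[OF assms]
  have ne: "u \<noteq> []" using assms by (simp add: upchain_def)
  have bne: "butlast u \<noteq> []" using assms by (cases u) auto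
  have sD: "successively cube_adj (rev (aD u))" using succ_adj_rev[OF upchain_adj[OF up(3)]] .
  have sA: "successively cube_adj (aA u)" using upchain_adj[OF up(2)] .
  have hb: "hd (butlast u) = hd u" using assms by (cases u) auto
  have j2: "cube_adj (last (rev (aD u))) (hd (aA u))"
    using assms ne bne hb by (simp add: aD_eq aA_eq hd_map last_rev adj_snoc2_diff1)
  have neD: "rev (aD u) \<noteq> []" using assms by (simp add: aD_eq)
  have neA: "aA u \<noteq> []" using ne by (simp add: aA_eq)
  have s2: "successively cube_adj (rev (aD u) @ aA u)" using sD sA j2 by (simp add: successively_append_iff del: successively_rev)
  have lA: "last (aA u) = last u @ [True, True]" using ne by (simp add: aA_eq)
  show ?thesis
  proof (cases "length u = 2")
    case True
    then obtain x y where u: "u = [x, y]" by (cases u; cases "tl u") auto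
    have "aE u = []" using u by (simp add: aE_eq)
    moreover have "hd (rev (aD u)) = hd u @ [True, True]" using u by (simp add: aD_eq)
    ultimately show ?thesis using s2 neD lA neA by (simp add: Qg_def)
  next
    case False
    hence l3: "3 \<le> length u" using assms by simp
    have sE: "successively cube_adj (aE u)" using upchain_adj[OF up(4)[OF l3]] .
    have bbne: "butlast (butlast u) \<noteq> []" using l3 by (cases u; cases "tl u"; cases "tl (tl u)") auto
    have "length u = Suc (Suc (Suc (length u - 3)))" using l3 by simp
    then obtain k where k: "length u = Suc (Suc (Suc k))" by blast
    have e1: "last (butlast (butlast u)) = u ! k" using k bbne
      by (simp add: last_conv_nth nth_butlast)
    have e2: "last (butlast u) = u ! Suc k" using k bne by (simp add: last_conv_nth nth_butlast)
    have st: "gk_up (u ! k) = Some (u ! Suc k)" using upchain_step[OF assms(1)] k by simp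
    have j1: "cube_adj (last (aE u)) (hd (rev (aD u)))"
      using bbne e1 e2 assms adj_snoc2_same[OF up_adj[OF st]] by (simp add: aE_eq aD_eq last_map hd_rev)
    have neE: "aE u \<noteq> []" using bbne by (simp add: aE_eq)
    have "hd (aE u) = hd u @ [True, True]"
    proof -
      have "hd (butlast (butlast u)) = hd u" using l3 by (cases u; cases "tl u"; cases "tl (tl u)") auto
      then show ?thesis using bbne by (simp add: aE_eq hd_map)
    qed
    moreover have "successively cube_adj (aE u @ rev (aD u) @ aA u)"
      using sE s2 j1 neD by (simp add: successively_append_iff del: successively_rev)
    ultimately show ?thesis using neE lA neA by (simp add: Qg_def)
  qed
qed

lemma app_length: "upchain m u \<Longrightarrow> 2 \<le> length u \<Longrightarrow> length (aB u) + length (Qg u) = 4 * length u"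
  by (simp add: aB_eq Qg_def aA_eq aD_eq aE_eq upchain_def)

lemma app_cover:
  assumes "upchain m u" "2 \<le> length u" "v \<in> set u"
  shows "v @ [a, b] \<in> set (aB u) \<union> set (Qg u)"
proof -
  have ne: "u \<noteq> []" using assms by (simp add: upchain_def)
  have sA: "set (aA u) \<subseteq> set (Qg u)" and sD: "set (aD u) \<subseteq> set (Qg u)" and sE: "set (aE u) \<subseteq> set (Qg u)"
    by (auto simp: Qg_def)
  have lb: "v = last u \<or> v \<in> set (butlast u)" using assms(3) by (rule in_set_last_butlast)
  show ?thesis
  proof (cases a)
    case a: True
    show ?thesis
    proof (cases b)
      case b: True
      show ?thesis
      proof (cases "v = last u")
        case True
        then have "v @ [a, b] \<in> set (aA u)" using a b ne by (simp add: aA_eq)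
        then show ?thesis using sA by blast
      next
        case False
        then have v1: "v \<in> set (butlast u)" using lb by simp
        have "v = last (butlast u) \<or> v \<in> set (butlast (butlast u))" using v1 by (rule in_set_last_butlast)
        then have "v @ [a, b] \<in> set (aD u) \<or> v @ [a, b] \<in> set (aE u)"
          using a b assms(2) by (auto simp: aD_eq aE_eq)
        then show ?thesis using sD sE by blast
      qed
    next
      case b: False
      show ?thesis
      proof (cases "v = last u")
        case True
        then have "v @ [a, b] \<in> set (aA u)" using a b ne by (simp add: aA_eq)
        then show ?thesis using sA by blast
      next
        case False
        then have v1: "v \<in> set (butlast u)" using lb by simp
        then have "v @ [a, b] \<in> set (aD u)" using a b assms(2) by (simp add: aD_eq)
        then show ?thesis using sD by blast
      qed
    qed
  next
    case a: False
    show ?thesis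
    proof (cases b)
      case True
      then show ?thesis using a assms(3) by (simp add: aB_eq)
    next
      case False
      then have "v @ [a, b] \<in> set (aA u)" using a ne assms(3) by (simp add: aA_eq)
      then show ?thesis using sA by blast
    qed
  qed
qed

lemma Qg_len: "upchain m u \<Longrightarrow> 2 \<le> length u \<Longrightarrow> w \<in> set (Qg u) \<Longrightarrow> length w = Suc (Suc m)"
proof -
  assume a: "upchain m u" "2 \<le> length u" "w \<in> set (Qg u)"
  note up = app_upchains[OF a(1,2)]
  show ?thesis
  proof (cases "3 \<le> length u")
    case True
    then show ?thesis using a(3) up upchain_len[OF up(2)] upchain_len[OF up(3)] upchain_len[OF up(4)[OF True]]
      by (auto simp: Qg_def)
  next
    case False
    hence "aE u = []" using a(2) by (cases u; cases "tl u"; cases "tl (tl u)") (auto simp: aE_eq)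
    then show ?thesis using a(3) upchain_len[OF up(2)] upchain_len[OF up(3)] by (auto simp: Qg_def)
  qed
qed

definition qo :: "nat \<Rightarrow> bool list list \<Rightarrow> bool" where
  "qo m c = (SOME q. upchain m (orient q c))"

lemma qo_spec: "\<exists>q. upchain m (orient q c) \<Longrightarrow> upchain m (orient (qo m c) c)"
  unfolding qo_def by (rule someI_ex)

definition aQ :: "nat \<Rightarrow> bool list list \<Rightarrow> bool list list" where
  "aQ m c = orient (qo m c) (Qg (orient (qo m c) c))"
definition RBa :: "nat \<Rightarrow> bool list list \<Rightarrow> bool list list list" where
  "RBa m c = map (orient (\<not> qo m c)) (orient (\<not> qo m c) (QLa (orient (qo m c) c)))"

lemma RBa_concat: "concat (RBa m c) = rev (aQ m c)"
  unfolding RBa_def aQ_def orient_concat[symmetric]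
  by (cases "qo m c") (simp_all add: QLa_def Qg_def)

definition CPo :: "nat \<Rightarrow> bool list list list \<Rightarrow> bool" where
  "CPo m cs \<longleftrightarrow> (\<forall>c\<in>set cs. \<exists>q. upchain m (orient q c)) \<and> cs \<noteq> [] \<and> successively cube_adj (concat cs)
     \<and> distinct (concat cs) \<and> set (concat cs) = cube_vertices m"

lemma aQ_props:
  assumes "\<exists>q. upchain m (orient q c)" "odd m"
  shows "successively cube_adj (aQ m c) \<and> aQ m c \<noteq> [] \<and> hd (aQ m c) = hd c @ [True, True] \<and> last (aQ m c) = last c @ [True, True]"
proof -
  let ?q = "qo m c" let ?u = "orient ?q c"
  have up: "upchain m ?u" using qo_spec[OF assms(1)] .
  have l2: "2 \<le> length ?u" using app_len_even[OF up assms(2)] .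
  note Q = Qg_props[OF up l2]
  have s: "successively cube_adj (aQ m c)" unfolding aQ_def using succ_adj_orient Q by blast
  have ne: "c \<noteq> []" using up by (simp add: upchain_def)
  have "aQ m c \<noteq> [] \<and> hd (aQ m c) = hd c @ [True, True] \<and> last (aQ m c) = last c @ [True, True]"
  proof (cases ?q)
    case True
    then show ?thesis using Q by (simp add: aQ_def)
  next
    case False
    then show ?thesis using Q ne by (simp add: aQ_def hd_rev last_rev)
  qed
  then show ?thesis using s by simp
qed

lemma orient_ex1: "upchain m x \<Longrightarrow> \<exists>q'. upchain m (orient q' (orient b x))"
  by (rule exI[of _ b]) simp
lemma orient_ex2: "upchain m x \<Longrightarrow> \<exists>q'. upchain m (orient q' (orient b (rev x)))"
  by (rule exI[of _ "\<not> b"]) (cases b, simp_all)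

lemma split_app: "length w = Suc (Suc m) \<Longrightarrow> \<exists>v a b. w = v @ [a, b] \<and> length v = m"
proof -
  assume l: "length w = Suc (Suc m)"
  have d2: "drop (Suc (Suc m)) w = []" using l by simp
  have d1: "drop (Suc m) w = [w ! Suc m]" using Cons_nth_drop_Suc[of "Suc m" w] l d2 by simp
  have d0: "drop m w = [w ! m, w ! Suc m]" using Cons_nth_drop_Suc[of m w] l d1 by simp
  have "w = take m w @ drop m w" by simp
  then have "w = take m w @ [w ! m, w ! Suc m]" using d0 by simp
  moreover have "length (take m w) = m" using l by simp
  ultimately show ?thesis by blast
qed

lemma concat_filter_ne: "concat (filter (\<lambda>c. c \<noteq> []) xs) = concat xs"
  by (induction xs) auto

lemma concat_RBa: "concat (concat (map (RBa m) (rev cs))) = rev (concat (map (aQ m) cs))"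
  by (induction cs) (simp_all add: RBa_concat)

lemma hd_concat_ne: "xs \<noteq> [] \<Longrightarrow> hd xs \<noteq> [] \<Longrightarrow> hd (concat xs) = hd (hd xs)"
  by (cases xs) auto
lemma last_concat_ne: "xs \<noteq> [] \<Longrightarrow> last xs \<noteq> [] \<Longrightarrow> last (concat xs) = last (last xs)"
proof -
  assume a: "xs \<noteq> []" "last xs \<noteq> []"
  have "concat xs = concat (butlast xs @ [last xs])" using append_butlast_last_id[OF a(1)] by simp
  also have "\<dots> = concat (butlast xs) @ last xs" by simp
  finally have "concat xs = concat (butlast xs) @ last xs" .
  then show ?thesis using a(2) by simp
qed

lemma length_aQ_sum: "(\<forall>c\<in>set cs. length (aQ m c) = 3 * length c) \<Longrightarrow>
  length (concat (map (aQ m) cs)) = 3 * length (concat cs)"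
  by (induction cs) auto

lemma app_step:
  assumes "odd m" "CPo m cs"
  defines "cs' \<equiv> filter (\<lambda>c. c \<noteq> []) (map (\<lambda>c. map (\<lambda>v. v @ [False, True]) c) cs @ concat (map (RBa m) (rev cs)))"
  shows "CPo (Suc (Suc m)) cs' \<and> cube_adj (last (concat cs')) (hd (concat cs'))"
proof -
  have ch: "\<forall>c\<in>set cs. \<exists>q. upchain m (orient q c)" and csne: "cs \<noteq> []"
    and sc: "successively cube_adj (concat cs)" and di: "distinct (concat cs)"
    and se: "set (concat cs) = cube_vertices m" using assms(2) by (auto simp: CPo_def)
  have nec: "\<forall>c\<in>set cs. c \<noteq> []" using ch by (auto simp: upchain_def)
  let ?f = "\<lambda>v. v @ [False, True]"
  let ?P = "map ?f (concat cs)"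
  let ?Q = "concat (map (aQ m) cs)"
  have e: "concat cs' = ?P @ rev ?Q"
    by (simp add: cs'_def concat_RBa map_concat concat_filter_ne del: filter_append)
  have junc: "successively (\<lambda>a b. cube_adj (last a) (hd b)) cs" using succ_concat_junction[OF nec sc] .
  have sP: "successively cube_adj ?P" unfolding successively_map using sc
    by (rule successively_mono) (rule adj_snoc2_same)
  have aQc: "\<And>c. c \<in> set cs \<Longrightarrow> successively cube_adj (aQ m c) \<and> aQ m c \<noteq> [] \<and> hd (aQ m c) = hd c @ [True, True] \<and> last (aQ m c) = last c @ [True, True]"
    using ch assms(1) aQ_props by blast
  have sQ: "successively cube_adj ?Q"
  proof (rule succ_concat_intro)
    show "\<forall>x\<in>set (map (aQ m) cs). successively cube_adj x \<and> x \<noteq> []" using aQc by auto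
    show "successively (\<lambda>a b. cube_adj (last a) (hd b)) (map (aQ m) cs)"
      unfolding successively_map using junc
    proof (rule successively_mono)
      fix a b assume "a \<in> set cs" "b \<in> set cs" "cube_adj (last a) (hd b)"
      then show "cube_adj (last (aQ m a)) (hd (aQ m b))" using aQc adj_snoc2_same by simp
    qed
  qed
  have cne: "concat cs \<noteq> []" using csne nec by (cases cs) auto
  have hdc: "hd (concat cs) = hd (hd cs)" using csne nec by (intro hd_concat_ne) auto
  have lac: "last (concat cs) = last (last cs)" using csne nec by (intro last_concat_ne) auto
  have hdQ: "hd ?Q = hd (hd cs) @ [True, True]"
    using csne aQc by (subst hd_concat_ne) (auto simp: hd_map)
  have laQ: "last ?Q = last (last cs) @ [True, True]"
    using csne aQc by (subst last_concat_ne) (auto simp: last_map)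
  have Qne: "?Q \<noteq> []" using hdQ csne aQc by (cases cs) auto
  have succ: "successively cube_adj (concat cs')" unfolding e using sP sQ Qne cne
    by (simp add: successively_append_iff last_map hd_rev lac laQ adj_snoc2_diff1 succ_adj_rev del: successively_rev)
  have cl: "cube_adj (last (concat cs')) (hd (concat cs'))" unfolding e using Qne cne
    by (simp add: last_rev hdQ hd_map hdc adj_snoc2_diff1)
  have chains: "\<forall>c\<in>set cs'. \<exists>q. upchain (Suc (Suc m)) (orient q c)"
  proof
    fix c assume c: "c \<in> set cs'"
    then have cne': "c \<noteq> []" by (auto simp: cs'_def)
    from c have "c \<in> set (map (map ?f) cs) \<or> (\<exists>c0\<in>set cs. c \<in> set (RBa m c0))" by (auto simp: cs'_def)
    then show "\<exists>q. upchain (Suc (Suc m)) (orient q c)"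
    proof
      assume "c \<in> set (map (map ?f) cs)"
      then obtain c0 where c0: "c0 \<in> set cs" "c = map ?f c0" by auto
      let ?q = "qo m c0" let ?u = "orient ?q c0"
      have up: "upchain m ?u" using qo_spec ch c0 by blast
      have l2: "2 \<le> length ?u" using app_len_even[OF up assms(1)] .
      have "c = orient ?q (aB ?u)" using c0 by (cases ?q) (simp_all add: aB_eq rev_map)
      then show ?thesis using orient_ex1[OF app_upchains(1)[OF up l2]] by simp
    next
      assume "\<exists>c0\<in>set cs. c \<in> set (RBa m c0)"
      then obtain c0 where c0: "c0 \<in> set cs" "c \<in> set (RBa m c0)" by blast
      let ?q = "qo m c0" let ?u = "orient ?q c0"
      have up: "upchain m ?u" using qo_spec ch c0 by blast
      have l2: "2 \<le> length ?u" using app_len_even[OF up assms(1)] .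
      note U = app_upchains[OF up l2]
      have "c \<in> orient (\<not> ?q) ` set (QLa ?u)" using c0(2) unfolding RBa_def by (simp only: set_map set_orient)
      then obtain X where X0: "X \<in> set (QLa ?u)" "c = orient (\<not> ?q) X" by blast
      have X: "X \<in> {aE ?u, rev (aD ?u), aA ?u}" "c = orient (\<not> ?q) X" using X0 by (auto simp: QLa_def)
      show ?thesis
      proof (cases "X = aE ?u")
        case True
        then have "aE ?u \<noteq> []" using X cne' by auto
        moreover have "length (aE ?u) = length ?u - 2" by (simp add: aE_eq)
        ultimately have "3 \<le> length ?u" using l2 by (cases "aE ?u") auto
        then show ?thesis using True X orient_ex1[OF U(4)] by simp
      next
        case False
        then show ?thesis using X orient_ex1[OF U(2)] orient_ex2[OF U(3)] by auto
      qed
    qed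
  qed
  have lenQ: "length ?Q = 3 * length (concat cs)"
  proof (rule length_aQ_sum, rule ballI)
    fix c assume c: "c \<in> set cs"
    let ?q = "qo m c" let ?u = "orient ?q c"
    have up: "upchain m ?u" using qo_spec ch c by blast
    have l2: "2 \<le> length ?u" using app_len_even[OF up assms(1)] .
    have "length (aQ m c) = length (Qg ?u)" by (simp add: aQ_def)
    also have "\<dots> = 3 * length c" using app_length[OF up l2] by (simp add: aB_eq)
    finally show "length (aQ m c) = 3 * length c" .
  qed
  have sub: "set (concat cs') \<subseteq> cube_vertices (Suc (Suc m))"
  proof
    fix w assume "w \<in> set (concat cs')"
    then have "w \<in> set ?P \<or> w \<in> set ?Q" unfolding e by auto
    then show "w \<in> cube_vertices (Suc (Suc m))"
    proof
      assume "w \<in> set ?P"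
      then show ?thesis using se by (auto simp: cube_vertices_def)
    next
      assume "w \<in> set ?Q"
      then obtain c where c: "c \<in> set cs" "w \<in> set (aQ m c)" by auto
      let ?q = "qo m c" let ?u = "orient ?q c"
      have up: "upchain m ?u" using qo_spec ch c by blast
      have l2: "2 \<le> length ?u" using app_len_even[OF up assms(1)] .
      have "w \<in> set (Qg ?u)" using c by (simp add: aQ_def)
      then show ?thesis using Qg_len[OF up l2] by (simp add: cube_vertices_def)
    qed
  qed
  have sup: "cube_vertices (Suc (Suc m)) \<subseteq> set (concat cs')"
  proof
    fix w assume "w \<in> cube_vertices (Suc (Suc m))"
    then have "length w = Suc (Suc m)" by (simp add: cube_vertices_def)
    then obtain v a b where w: "w = v @ [a, b]" "length v = m" using split_app by blast
    then have "v \<in> set (concat cs)" using se by (simp add: cube_vertices_def)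
    then obtain c where c: "c \<in> set cs" "v \<in> set c" by auto
    let ?q = "qo m c" let ?u = "orient ?q c"
    have up: "upchain m ?u" using qo_spec ch c by blast
    have l2: "2 \<le> length ?u" using app_len_even[OF up assms(1)] .
    have "w \<in> set (aB ?u) \<union> set (Qg ?u)" using app_cover[OF up l2, of v a b] c w by simp
    moreover have "set (aB ?u) \<subseteq> set ?P" using c by (auto simp: aB_eq)
    moreover have "set (Qg ?u) \<subseteq> set ?Q" using c by (auto simp: aQ_def)
    ultimately show "w \<in> set (concat cs')" unfolding e by auto
  qed
  have seteq: "set (concat cs') = cube_vertices (Suc (Suc m))" using sub sup by blast
  have "length (concat cs) = 2 ^ m" using distinct_card[OF di] se card_cube by simp
  hence "length (concat cs') = 2 ^ Suc (Suc m)" unfolding e using lenQ by simp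
  hence dist: "distinct (concat cs')" using seteq card_cube by (intro card_distinct) simp
  have "replicate (Suc (Suc m)) False \<in> cube_vertices (Suc (Suc m))" by (simp add: cube_vertices_def)
  hence "cs' \<noteq> []" using seteq by (cases cs') auto
  then show ?thesis using chains succ dist seteq cl by (simp add: CPo_def)
qed

lemma base0: "alt 0 True [[[]]] \<and> [[[]]] \<noteq> [] \<and> successively cube_adj (concat [[[]]]) \<and>
  distinct (concat [[[]]]) \<and> set (concat [[[]]]) = cube_vertices 0"
proof -
  have u: "upchain 0 [[]]" unfolding upchain_def by (simp add: unmatched_ones_def unmatched_zeros_def)
  have cv: "cube_vertices 0 = {[]}" by (auto simp: cube_vertices_def)
  show ?thesis by (simp add: u cv)
qed

lemma base1: "CPo 1 [[[False], [True]]]"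
proof -
  have uo: "UO [False] = {}" by (simp add: unmatched_ones_def)
  have uz: "UZ [True] = {}" by (simp add: unmatched_zeros_def)
  have uz0: "UZ [False] = {0}" by (simp add: unmatched_zeros_def)
  have g: "gk_up [False] = Some [True]" by (simp add: gk_up_def uz0)
  have up: "upchain 1 [[False], [True]]" unfolding upchain_def using uo uz g by simp
  have ex: "\<exists>q. upchain 1 (orient q [[False], [True]])" using up by (intro exI[of _ True]) simp
  have adj: "cube_adj [False] [True]" using adj_cons_diff[of False True "[]"] by simp
  have cv: "cube_vertices 1 = {[False], [True]}"
  proof
    show "cube_vertices 1 \<subseteq> {[False], [True]}"
    proof
      fix x assume "x \<in> cube_vertices 1"
      then have "length x = 1" by (simp add: cube_vertices_def)
      then obtain b where "x = [b]" by (cases x) auto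
      then show "x \<in> {[False], [True]}" by (cases b) auto
    qed
    show "{[False], [True]} \<subseteq> cube_vertices 1" by (simp add: cube_vertices_def)
  qed
  show ?thesis unfolding CPo_def using ex adj cv by simp
qed

lemma even_inv: "\<exists>cs p. alt (2 * k) p cs \<and> cs \<noteq> [] \<and> successively cube_adj (concat cs) \<and>
  distinct (concat cs) \<and> set (concat cs) = cube_vertices (2 * k) \<and>
  (1 \<le> k \<longrightarrow> cube_adj (last (concat cs)) (hd (concat cs)))"
proof (induction k)
  case 0
  show ?case by (rule exI[of _ "[[[]]]"], rule exI[of _ True]) (use base0 in simp)
next
  case (Suc k)
  then obtain cs p where h: "alt (2 * k) p cs" "cs \<noteq> []" "successively cube_adj (concat cs)"
    "distinct (concat cs)" "set (concat cs) = cube_vertices (2 * k)" by blast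
  have ev: "even (2 * k)" by simp
  note M = mix_step[OF ev h]
  have e: "Suc (Suc (2 * k)) = 2 * Suc k" by simp
  show ?case using M unfolding e by blast
qed

lemma odd_inv: "\<exists>cs. CPo (2 * k + 1) cs \<and> (1 \<le> k \<longrightarrow> cube_adj (last (concat cs)) (hd (concat cs)))"
proof (induction k)
  case 0
  then show ?case using base1 by auto
next
  case (Suc k)
  then obtain cs where h: "CPo (2 * k + 1) cs" by blast
  have od: "odd (2 * k + 1)" by simp
  note M = app_step[OF od h]
  have e: "Suc (Suc (2 * k + 1)) = 2 * Suc k + 1" by simp
  show ?case using M unfolding e by blast
qed

lemma alt_chains: "alt m p cs \<Longrightarrow> \<forall>c\<in>set cs. \<exists>q. upchain m (orient q c)"
  by (induction m p cs rule: alt.induct) auto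

lemma cyc_edge: "{s, t} \<in> cycle_edges (A @ s # t # B)"
proof -
  let ?C = "A @ s # t # B"
  let ?i = "length A"
  have "?C ! ?i = s" by simp
  moreover have "?C ! ((?i + 1) mod length ?C) = t" by (simp add: nth_append)
  moreover have "?i < length ?C" by simp
  ultimately have "{s, t} = {?C ! ?i, ?C ! ((?i + 1) mod length ?C)} \<and> ?i < length ?C" by simp
  then show ?thesis unfolding cycle_edges_def by blast
qed

lemma edge_in:
  assumes ch: "\<forall>c\<in>set cs. \<exists>q. upchain n (orient q c)"
    and x: "x \<in> set (concat cs)" and up: "gk_up x = Some y"
  shows "{x, y} \<in> cycle_edges (concat cs)"
proof -
  obtain c where c: "c \<in> set cs" "x \<in> set c" using x by auto
  obtain q where u: "upchain n (orient q c)" using ch c by blast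
  let ?u = "orient q c"
  have "x \<in> set ?u" using c by simp
  then obtain i where i: "i < length ?u" "?u ! i = x" unfolding in_set_conv_nth by blast
  have "Suc i < length ?u"
  proof (rule ccontr)
    assume "\<not> Suc i < length ?u"
    hence "i = length ?u - 1" using i by simp
    hence "UZ x = {}" using upchain_last[OF u] i by simp
    then show False using up_ne[OF up] by simp
  qed
  then have st: "gk_up x = Some (?u ! Suc i)" using upchain_step[OF u] i(2) by metis
  then have y: "?u ! Suc i = y" using up by simp
  have d1: "drop i ?u = x # drop (Suc i) ?u" using Cons_nth_drop_Suc[OF i(1)] i(2) by simp
  have d2: "drop (Suc i) ?u = y # drop (Suc (Suc i)) ?u" using Cons_nth_drop_Suc[OF \<open>Suc i < length ?u\<close>] y by simp
  have "?u = take i ?u @ drop i ?u" by simp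
  also have "\<dots> = take i ?u @ x # y # drop (Suc (Suc i)) ?u" using d1 d2 by simp
  finally obtain pre suf where ud: "?u = pre @ x # y # suf" by blast
  obtain cs1 cs2 where cs: "cs = cs1 @ c # cs2" using c(1) by (meson split_list)
  show ?thesis
  proof (cases q)
    case True
    then have "c = pre @ x # y # suf" using ud by simp
    then have eq: "concat cs = (concat cs1 @ pre) @ x # y # (suf @ concat cs2)"
      using cs by simp
    show ?thesis unfolding eq by (rule cyc_edge)
  next
    case False
    then have "rev c = pre @ x # y # suf" using ud by simp
    then have "c = rev suf @ y # x # rev pre" by (simp add: rev_swap)
    then have eq: "concat cs = (concat cs1 @ rev suf) @ y # x # (rev pre @ concat cs2)"
      using cs by simp
    have "{y, x} \<in> cycle_edges (concat cs)" unfolding eq by (rule cyc_edge)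
    then show ?thesis by (simp add: insert_commute)
  qed
qed

lemma final:
  assumes "2 \<le> n" "\<forall>c\<in>set cs. \<exists>q. upchain n (orient q c)" "successively cube_adj (concat cs)"
    "distinct (concat cs)" "set (concat cs) = cube_vertices n" "cube_adj (last (concat cs)) (hd (concat cs))"
  shows "ham_cycle n (concat cs) \<and> gk_chain_edges n \<subseteq> cycle_edges (concat cs)"
proof -
  let ?L = "concat cs"
  have len: "length ?L = 2 ^ n" using distinct_card[OF assms(4)] assms(5) card_cube by simp
  have "(2::nat) ^ 2 \<le> 2 ^ n" using assms(1) by (intro power_increasing) auto
  hence l4: "4 \<le> length ?L" using len by simp
  have adj: "\<forall>i < length ?L. cube_adj (?L ! i) (?L ! ((i + 1) mod length ?L))"
  proof (intro allI impI)
    fix i assume i: "i < length ?L"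
    show "cube_adj (?L ! i) (?L ! ((i + 1) mod length ?L))"
    proof (cases "Suc i < length ?L")
      case True
      then show ?thesis using successively_nth[OF assms(3) True] by simp
    next
      case False
      hence si: "Suc i = length ?L" using i by simp
      have "length ?L > 0" using l4 by linarith
      then have ne: "?L \<noteq> []" using length_greater_0_conv by blast
      have ii: "i = length ?L - 1" using si by simp
      have "?L ! i = last ?L" unfolding ii using ne by (simp add: last_conv_nth)
      moreover have "?L ! ((i + 1) mod length ?L) = hd ?L" using si ne by (simp add: hd_conv_nth)
      ultimately show ?thesis using assms(6) by simp
    qed
  qed
  have ham: "ham_cycle n ?L" unfolding ham_cycle_def using assms(4,5) l4 adj by simp
  have edges: "gk_chain_edges n \<subseteq> cycle_edges ?L"
  proof
    fix e assume "e \<in> gk_chain_edges n"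
    then obtain x y where e: "e = {x, y}" "x \<in> cube_vertices n" "gk_up x = Some y \<or> gk_down x = Some y"
      unfolding gk_chain_edges_def by blast
    show "e \<in> cycle_edges ?L"
      using e(3)
    proof
      assume g: "gk_up x = Some y"
      have "x \<in> set ?L" using e(2) assms(5) by blast
      then show ?thesis using edge_in[OF assms(2) _ g] e(1) by blast
    next
      assume d: "gk_down x = Some y"
      have "length y = length x" using down_step[OF d] by simp
      hence "y \<in> set ?L" using e(2) assms(5) by (simp add: cube_vertices_def)
      then have "{y, x} \<in> cycle_edges ?L" using edge_in[OF assms(2) _ down_up[OF d]] by simp
      then show ?thesis using e by (simp add: insert_commute)
    qed
  qed
  show ?thesis using ham edges by simp
qed

theorem theorem3:
  fixes n :: nat
  assumes "n \<ge> 2"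
  shows "\<exists>C. ham_cycle n C \<and> gk_chain_edges n \<subseteq> cycle_edges C"
proof (cases "even n")
  case True
  then obtain k where k: "n = 2 * k" by blast
  hence k1: "1 \<le> k" using assms by simp
  obtain cs p where h: "alt (2 * k) p cs" "cs \<noteq> []" "successively cube_adj (concat cs)"
    "distinct (concat cs)" "set (concat cs) = cube_vertices (2 * k)"
    "cube_adj (last (concat cs)) (hd (concat cs))" using even_inv[of k] k1 by blast
  have "ham_cycle n (concat cs) \<and> gk_chain_edges n \<subseteq> cycle_edges (concat cs)"
    using final[of n cs] assms alt_chains[OF h(1)] h(3-6) unfolding k[symmetric] by simp
  then show ?thesis by blast
next
  case False
  then obtain k where k: "n = 2 * k + 1" using oddE by blast
  hence k1: "1 \<le> k" using assms by simp
  obtain cs where h: "CPo (2 * k + 1) cs" "cube_adj (last (concat cs)) (hd (concat cs))"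
    using odd_inv[of k] k1 by blast
  have "ham_cycle n (concat cs) \<and> gk_chain_edges n \<subseteq> cycle_edges (concat cs)"
    using final[of n cs] assms h unfolding k[symmetric] CPo_def by simp
  then show ?thesis by blast
qed

end
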